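(* Let $A\subseteq\mathcal B$. Every $A$-restricted strongly polynomial-time computable functional $F\colon A\to\mathcal B$ has a total strongly polynomial-time computable extension $\tilde F\colon\mathcal B\to\mathcal B$.
   Context: $\Sigma=\{0,1\}$, $\mathcal B=(\Sigma^* )^{\Sigma^*}$ is the set of total string functions. An oracle Turing machine $M^?$ with oracle $\varphi$ replaces, upon entering its query state, the query-tape content $\mathbf b$ by $\varphi(\mathbf b)$ in one time step; $\operatorname{time}_{M^\varphi}(\mathbf a)\in\mathbb N\cup\{\infty\}$ is its number of steps on input $\mathbf a$. $M^?$ computes $F\colon A\to\mathcal B$ if $M^\varphi=F(\varphi)$ for all $\varphi\in A$. Length revision function: with $\mathbf b_k$ the content of the oracle answer tape at step $k$ of the run of $M^\varphi$ on $\mathbf a$, $o_{\varphi,\mathbf a}(0)=|\mathbf a|$, $o_{\varphi,\mathbf a}(n+1)=\max\{o_{\varphi,\mathbf a}(n),|\mathbf b_{n+1}|\}$. For $A\subseteq\mathcal B$, $t\colon\mathbb N\to\mathbb N$ is an $A$-step-count for $M^?$ if for all $\varphi\in A$, $\mathbf a\in\Sigma^*$, $n\le\operatorname{time}_{M^\varphi}(\mathbf a)$: $n\le t(o_{\varphi,\mathbf a}(n))$; $M^?$ has $A$-finite length-revision if there is $N\in\mathbb N$ with $\#o_{\varphi,\mathbf a}(\mathbb N)\le N$ for all $\varphi\in A$, $\mathbf a\in\Sigma^*$. $F\colon A\to\mathcal B$ is $A$-restricted strongly polynomial-time computable if computed by a machine having $A$-finite length-revision and a polynomial $A$-step-count.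 A total functional is strongly polynomial-time computable if this holds with $A=\mathcal B$. *)

theory Defs
  imports Main "HOL-Library.Extended_Nat" "HOL-Computational_Algebra.Polynomial"
begin

text \<open>Strings over \<Sigma> = {0,1} are bool lists (False = 0, True = 1);
  the set of total string functions is bool list \<Rightarrow> bool list.\<close>

type_synonym str = "bool list"
type_synonym strfun = "str \<Rightarrow> str"

datatype sym = SBlank | S0 | S1
datatype dir = MvL | MvR | Stay

type_synonym tape = "(nat \<Rightarrow> sym) \<times> nat"

text \<open>Tape layout: tape 0 = input (read-only), tape 1 = oracle answer tape (read-only),
  tape 2 = query tape, tape 3 = output tape, tapes 4.. = work tapes.\<close>
record otm =
  nwork  :: nat
  nstates :: nat
  delta  :: "nat \<Rightarrow> sym list \<Rightarrow> nat \<times> (sym \<times> dir) list"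
  qstart :: nat
  qhalt  :: nat
  qquery :: nat
  qans   :: nat

definition ntapes :: "otm \<Rightarrow> nat" where
  "ntapes M = 4 + nwork M"

text \<open>Well-formedness: finitely many states, transitions stay inside the state set and
  give one action per tape (the transition table is finite since only states below
  nstates and symbol vectors of length ntapes over a finite alphabet are ever consulted).\<close>
definition wf_otm :: "otm \<Rightarrow> bool" where
  "wf_otm M \<longleftrightarrow> qstart M < nstates M \<and> qhalt M < nstates M \<and> qquery M < nstates M
     \<and> qans M < nstates M
     \<and> (\<forall>q < nstates M. \<forall>ss. length ss = ntapes M \<longrightarrow>
           fst (delta M q ss) < nstates M \<and> length (snd (delta M q ss)) = ntapes M)"

definition encode :: "str \<Rightarrow> (nat \<Rightarrow> sym)" where
  "encode w = (\<lambda>i. if i < length w then (if w ! i then S1 else S0) else SBlank)"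

definition content :: "tape \<Rightarrow> str" where
  "content t = (if \<exists>n. fst t n = SBlank
     then map (\<lambda>i. fst t i = S1) [0..<(LEAST n. fst t n = SBlank)] else [])"

definition mv :: "dir \<Rightarrow> nat \<Rightarrow> nat" where
  "mv d h = (case d of MvL \<Rightarrow> h - 1 | MvR \<Rightarrow> h + 1 | Stay \<Rightarrow> h)"

definition act :: "nat \<Rightarrow> tape \<Rightarrow> sym \<times> dir \<Rightarrow> tape" where
  "act i t a = (if i \<le> 1 then (fst t, mv (snd a) (snd t))
                else ((fst t)(snd t := fst a), mv (snd a) (snd t)))"

type_synonym config = "nat \<times> tape list"

definition step :: "otm \<Rightarrow> strfun \<Rightarrow> config \<Rightarrow> config" where
  "step M \<phi> c = (let q = fst c; ts = snd c in
     if q = qhalt M then c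
     else if q = qquery M then (qans M, ts[1 := (encode (\<phi> (content (ts ! 2))), 0)])
     else (let r = delta M q (map (\<lambda>t. fst t (snd t)) ts) in
           (fst r, map (\<lambda>i. act i (ts ! i) (snd r ! i)) [0..<length ts])))"

definition initial :: "otm \<Rightarrow> str \<Rightarrow> config" where
  "initial M a = (qstart M, (encode a, 0) # replicate (ntapes M - 1) (\<lambda>_. SBlank, 0))"

definition run :: "otm \<Rightarrow> strfun \<Rightarrow> str \<Rightarrow> nat \<Rightarrow> config" where
  "run M \<phi> a n = (step M \<phi> ^^ n) (initial M a)"

definition halted_at :: "otm \<Rightarrow> strfun \<Rightarrow> str \<Rightarrow> nat \<Rightarrow> bool" where
  "halted_at M \<phi> a n \<longleftrightarrow> fst (run M \<phi> a n) = qhalt M"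

definition time :: "otm \<Rightarrow> strfun \<Rightarrow> str \<Rightarrow> enat" where
  "time M \<phi> a = (if \<exists>n. halted_at M \<phi> a n then enat (LEAST n. halted_at M \<phi> a n) else \<infinity>)"

definition otm_output :: "otm \<Rightarrow> strfun \<Rightarrow> str \<Rightarrow> str" where
  "otm_output M \<phi> a = content (snd (run M \<phi> a (LEAST n. halted_at M \<phi> a n)) ! 3)"

definition computes :: "otm \<Rightarrow> strfun set \<Rightarrow> (strfun \<Rightarrow> strfun) \<Rightarrow> bool" where
  "computes M A F \<longleftrightarrow> (\<forall>\<phi>\<in>A. \<forall>a. time M \<phi> a \<noteq> \<infinity> \<and> otm_output M \<phi> a = F \<phi> a)"

fun lrev :: "otm \<Rightarrow> strfun \<Rightarrow> str \<Rightarrow> nat \<Rightarrow> nat" where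
  "lrev M \<phi> a 0 = length a"
| "lrev M \<phi> a (Suc n) = max (lrev M \<phi> a n) (length (content (snd (run M \<phi> a (Suc n)) ! 1)))"

definition step_count :: "otm \<Rightarrow> strfun set \<Rightarrow> (nat \<Rightarrow> nat) \<Rightarrow> bool" where
  "step_count M A t \<longleftrightarrow> (\<forall>\<phi>\<in>A. \<forall>a. \<forall>n. enat n \<le> time M \<phi> a \<longrightarrow> n \<le> t (lrev M \<phi> a n))"

definition finite_length_revision :: "otm \<Rightarrow> strfun set \<Rightarrow> bool" where
  "finite_length_revision M A \<longleftrightarrow> (\<exists>N. \<forall>\<phi>\<in>A. \<forall>a.
      finite (range (lrev M \<phi> a)) \<and> card (range (lrev M \<phi> a)) \<le> N)"

definition is_polynomial :: "(nat \<Rightarrow> nat) \<Rightarrow> bool" where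
  "is_polynomial t \<longleftrightarrow> (\<exists>p :: nat poly. \<forall>n. t n = poly p n)"

definition restricted_strongly_ptime :: "strfun set \<Rightarrow> (strfun \<Rightarrow> strfun) \<Rightarrow> bool" where
  "restricted_strongly_ptime A F \<longleftrightarrow> (\<exists>M. wf_otm M \<and> computes M A F
      \<and> finite_length_revision M A \<and> (\<exists>t. is_polynomial t \<and> step_count M A t))"

definition strongly_ptime :: "(strfun \<Rightarrow> strfun) \<Rightarrow> bool" where
  "strongly_ptime F \<longleftrightarrow> restricted_strongly_ptime UNIV F"

end

theory Submission
  imports Defs
begin


lemma encode_Nil: "encode [] = (\<lambda>_. SBlank)"
  by (simp add: encode_def)

lemma content_encode[simp]: "content (encode b, h) = b"
proof -
  have ex: "\<exists>n. encode b n = SBlank" by (rule exI[of _ "length b"]) (simp add: encode_def)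
  have le: "(LEAST n. encode b n = SBlank) = length b"
    by (rule Least_equality) (auto simp: encode_def split: if_splits)
  have "content (encode b, h) = map (\<lambda>i. encode b i = S1) [0..<length b]"
    unfolding content_def using ex le by simp
  then show ?thesis by (auto simp: encode_def intro!: nth_equalityI)
qed

lemma content_blank[simp]: "content (\<lambda>_. SBlank, h) = []"
  using content_encode[of "[]" h] by (simp add: encode_Nil)

lemma content_fst: "fst t = fst u \<Longrightarrow> content t = content u"
  by (simp add: content_def)

lemma run_0: "run M \<phi> a 0 = initial M a" by (simp add: run_def)
lemma run_Suc: "run M \<phi> a (Suc n) = step M \<phi> (run M \<phi> a n)" by (simp add: run_def)

lemma step_halted: "fst c = qhalt M \<Longrightarrow> step M \<phi> c = c"
  by (simp add: step_def Let_def)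

lemma halted_stable: "halted_at M \<phi> a n \<Longrightarrow> run M \<phi> a (n + k) = run M \<phi> a n"
  by (induction k) (auto simp: run_Suc halted_at_def step_halted)

lemma halted_stable': "halted_at M \<phi> a n \<Longrightarrow> n \<le> n' \<Longrightarrow> run M \<phi> a n' = run M \<phi> a n"
  using halted_stable[of M \<phi> a n "n' - n"] by simp

lemma halted_at_mono: "halted_at M \<phi> a n \<Longrightarrow> n \<le> n' \<Longrightarrow> halted_at M \<phi> a n'"
  using halted_stable'[of M \<phi> a n n'] by (simp add: halted_at_def)

lemma lrev_mono: "n \<le> n' \<Longrightarrow> lrev M \<phi> a n \<le> lrev M \<phi> a n'"
proof (induction n' )
  case 0 then show ?case by simp
next
  case (Suc n') then show ?case by (cases "n = Suc n'") auto
qed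

lemma time_ge: "\<not> halted_at M \<phi> a n \<Longrightarrow> enat (Suc n) \<le> time M \<phi> a"
proof (cases "\<exists>j. halted_at M \<phi> a j")
  case True
  assume nh: "\<not> halted_at M \<phi> a n"
  have "n < (LEAST j. halted_at M \<phi> a j)"
  proof (rule ccontr)
    assume "\<not> n < (LEAST j. halted_at M \<phi> a j)"
    then have "(LEAST j. halted_at M \<phi> a j) \<le> n" by simp
    moreover have "halted_at M \<phi> a (LEAST j. halted_at M \<phi> a j)" using True by (rule LeastI_ex)
    ultimately show False using halted_at_mono nh by blast
  qed
  then show ?thesis using True by (simp add: time_def)
next
  case False then show ?thesis by (simp add: time_def)
qed

lemma ntapes_ge: "4 \<le> ntapes M" by (simp add: ntapes_def)

lemma M_run_inv:
  assumes "wf_otm M"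
  shows "fst (run M \<phi> a m) < nstates M \<and> length (snd (run M \<phi> a m)) = ntapes M"
proof (induction m)
  case 0 then show ?case using assms ntapes_ge[of M]
    by (simp add: run_0 initial_def wf_otm_def)
next
  case (Suc m)
  obtain q ts where c: "run M \<phi> a m = (q, ts)" by (cases "run M \<phi> a m")
  show ?case using Suc assms c
    by (auto simp: run_Suc step_def Let_def wf_otm_def)
qed

lemma ans_le: "length (content (snd (run M \<phi> a m) ! 1)) \<le> lrev M \<phi> a m"
proof (cases m)
  case 0
  have "snd (run M \<phi> a 0) ! 1 = (\<lambda>_. SBlank, 0)" using ntapes_ge[of M]
    by (simp add: run_0 initial_def nth_Cons' )
  then show ?thesis using 0 by simp
next
  case (Suc k) then show ?thesis by simp
qed


lemma poly_bound: fixes p :: "nat poly" shows "\<exists>K. \<forall>x. poly p x < (x+2)^K"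
proof -
  define c where "c = (\<Sum>i\<le>degree p. coeff p i)"
  define d where "d = degree p"
  have "poly p x < (x+2)^(c+d)" for x
  proof -
    have "poly p x = (\<Sum>i\<le>degree p. coeff p i * x^i)" by (simp add: poly_altdef)
    also have "\<dots> \<le> (\<Sum>i\<le>degree p. coeff p i * (x+2)^d)"
    proof (rule sum_mono)
      fix i assume "i \<in> {..degree p}"
      then have "i \<le> d" by (simp add: d_def)
      have "x^i \<le> (x+2)^i" by (rule power_mono) auto
      also have "\<dots> \<le> (x+2)^d" using \<open>i \<le> d\<close> by (rule power_increasing) auto
      finally show "coeff p i * x^i \<le> coeff p i * (x+2)^d" by simp
    qed
    also have "\<dots> = c * (x+2)^d" by (simp add: c_def sum_distrib_right)
    also have "\<dots> < (x+2)^c * (x+2)^d"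
    proof -
      have "c < 2^c" by (rule less_exp)
      also have "(2::nat)^c \<le> (x+2)^c" by (rule power_mono) auto
      finally show ?thesis by simp
    qed
    also have "\<dots> = (x+2)^(c+d)" by (simp add: power_add)
    finally show ?thesis .
  qed
  then show ?thesis by blast
qed

lemma is_poly_const: "is_polynomial (\<lambda>_. c)"
  unfolding is_polynomial_def by (rule exI[of _ "[:c:]"]) simp

lemma is_poly_id: "is_polynomial (\<lambda>n. n)"
  unfolding is_polynomial_def by (rule exI[of _ "[:0,1:]"]) simp

lemma is_poly_add: "is_polynomial f \<Longrightarrow> is_polynomial g \<Longrightarrow> is_polynomial (\<lambda>n. f n + g n)"
  unfolding is_polynomial_def by (metis poly_add)

lemma is_poly_mult: "is_polynomial f \<Longrightarrow> is_polynomial g \<Longrightarrow> is_polynomial (\<lambda>n. f n * g n)"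
  unfolding is_polynomial_def by (metis poly_mult)

lemma is_poly_pow: "is_polynomial f \<Longrightarrow> is_polynomial (\<lambda>n. f n ^ k)"
  unfolding is_polynomial_def by (metis poly_power)


lemma geo_sum: "Suc (\<Sum>i<j. L*(L+1)^i) = (L+1::nat)^j"
  by (induction j) (auto simp: algebra_simps)

lemma sum_split3:
  fixes f :: "nat \<Rightarrow> nat"
  assumes "j < K"
  shows "(\<Sum>i<K. f i) = (\<Sum>i<j. f i) + f j + (\<Sum>i\<in>{Suc j..<K}. f i)"
proof -
  have "(\<Sum>i<K. f i) = (\<Sum>i\<in>{0..<K}. f i)" by (simp add: atLeast0LessThan)
  also have "\<dots> = (\<Sum>i\<in>{0..<j}. f i) + (\<Sum>i\<in>{j..<K}. f i)"
    using assms by (simp add: sum.atLeastLessThan_concat)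
  also have "(\<Sum>i\<in>{j..<K}. f i) = f j + (\<Sum>i\<in>{Suc j..<K}. f i)"
    using assms by (simp add: sum.atLeast_Suc_lessThan)
  finally show ?thesis by (simp add: atLeast0LessThan)
qed

lemma mu_tick_abs:
  fixes v v' :: "nat \<Rightarrow> nat"
  assumes "j < K" "\<forall>i<j. v i = L" "\<forall>i<j. v' i = 0" "v' j = Suc (v j)"
    "\<forall>i. j < i \<and> i < K \<longrightarrow> v' i = v i"
  shows "(\<Sum>i<K. v' i * (L+1)^i) = Suc (\<Sum>i<K. v i * (L+1)^i)"
proof -
  have a: "(\<Sum>i<j. v i * (L+1)^i) = (\<Sum>i<j. L * (L+1)^i)" using assms(2) by simp
  have b: "(\<Sum>i<j. v' i * (L+1)^i) = 0" using assms(3) by simp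
  have c: "(\<Sum>i\<in>{Suc j..<K}. v' i * (L+1)^i) = (\<Sum>i\<in>{Suc j..<K}. v i * (L+1)^i)"
    using assms(5) by (intro sum.cong) auto
  show ?thesis
    using sum_split3[OF assms(1), of "\<lambda>i. v' i * (L+1)^i"] sum_split3[OF assms(1), of "\<lambda>i. v i * (L+1)^i"]
      a b c assms(4) geo_sum[of L j] by simp
qed

lemma mu_le_abs:
  fixes v :: "nat \<Rightarrow> nat"
  assumes "\<forall>i<K. v i \<le> L"
  shows "(\<Sum>i<K. v i * (L+1)^i) \<le> (L+1)^K - 1"
proof -
  have "(\<Sum>i<K. v i * (L+1)^i) \<le> (\<Sum>i<K. L * (L+1)^i)"
    using assms by (intro sum_mono) auto
  then show ?thesis using geo_sum[of L K] by simp
qed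

lemma mu_full_abs:
  fixes v :: "nat \<Rightarrow> nat"
  assumes "\<forall>i<K. v i = L"
  shows "(\<Sum>i<K. v i * (L+1)^i) = (L+1)^K - 1"
proof -
  have "(\<Sum>i<K. v i * (L+1)^i) = (\<Sum>i<K. L * (L+1)^i)"
    using assms by (intro sum.cong) auto
  then show ?thesis using geo_sum[of L K] by simp
qed


definition ruler :: "nat \<Rightarrow> nat \<Rightarrow> sym" where
  "ruler L j = (if j = 0 then S0 else if j < L then S1 else SBlank)"

definition mixr :: "nat \<Rightarrow> nat \<Rightarrow> nat \<Rightarrow> nat \<Rightarrow> sym" where
  "mixr L Lo h j = (if j < h then ruler L j else ruler Lo j)"

definition blankT :: tape where "blankT = (\<lambda>_. SBlank, 0)"

lemma act_keep[simp]: "act x t (fst t (snd t), Stay) = t"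
  by (cases t) (simp add: act_def mv_def)

lemma act_hi: "2 \<le> x \<Longrightarrow> act x t (s, d) = ((fst t)(snd t := s), mv d (snd t))"
  by (simp add: act_def)

lemma act_lo: "x \<le> 1 \<Longrightarrow> act x t (s, d) = (fst t, mv d (snd t))"
  by (simp add: act_def)

lemma act_fst_1[simp]: "fst (act (Suc 0) t a) = fst t"
  by (simp add: act_def)

lemma mv_simps[simp]: "mv MvL h = h - 1" "mv MvR h = Suc h" "mv Stay h = h"
  by (simp_all add: mv_def)

lemma ruler_simps: "ruler L 0 = S0" "0 < j \<Longrightarrow> j < L \<Longrightarrow> ruler L j = S1"
  "L \<le> j \<Longrightarrow> 0 < j \<Longrightarrow> ruler L j = SBlank"
  by (auto simp: ruler_def)

lemma ruler_ext: "1 \<le> L \<Longrightarrow> (ruler L)(L := S1) = ruler (Suc L)"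
  by (auto simp: ruler_def fun_eq_iff)

lemma ruler_1: "(\<lambda>_. SBlank)(0 := S0) = ruler 1"
  by (auto simp: ruler_def fun_eq_iff)

lemma ruler_S0_iff: "1 \<le> L \<Longrightarrow> ruler L j = S0 \<longleftrightarrow> j = 0"
  by (auto simp: ruler_def)

lemma ruler_Blank_iff: "1 \<le> L \<Longrightarrow> ruler L j = SBlank \<longleftrightarrow> L \<le> j"
  by (auto simp: ruler_def)

locale ext =
  fixes M :: otm and K :: nat and Nc :: nat and A :: "strfun set" and t :: "nat \<Rightarrow> nat"
  assumes wfM: "wf_otm M"
    and scM: "step_count M A t"
    and flrM: "\<forall>\<phi>\<in>A. \<forall>a. finite (range (lrev M \<phi> a)) \<and> card (range (lrev M \<phi> a)) \<le> Nc"
    and tK: "\<forall>x. t x < (x+2)^K"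
begin

abbreviation "tM \<equiv> ntapes M"
abbreviation "iW \<equiv> ntapes M"
abbreviation "iR i \<equiv> ntapes M + 1 + i"
abbreviation "iD i \<equiv> ntapes M + 1 + K + i"
abbreviation "iC j \<equiv> ntapes M + 1 + 2*K + j"
abbreviation "isR x \<equiv> ntapes M + 1 \<le> x \<and> x < ntapes M + 1 + K"
abbreviation "isD x \<equiv> ntapes M + 1 + K \<le> x \<and> x < ntapes M + 1 + 2*K"
abbreviation "isC x \<equiv> ntapes M + 1 + 2*K \<le> x \<and> x < ntapes M + 1 + 2*K + Nc"

abbreviation "HALTs \<equiv> nstates M"
abbreviation "QRY \<equiv> nstates M + 1"
abbreviation "INIT0 \<equiv> nstates M + 2"
abbreviation "INIT1 \<equiv> nstates M + 3"
abbreviation "INITRW \<equiv> nstates M + 4"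
abbreviation "CHK0 \<equiv> nstates M + 5"
abbreviation "CHK1 \<equiv> nstates M + 6"
abbreviation "CHK1X \<equiv> nstates M + 7"
abbreviation "CHKRW \<equiv> nstates M + 8"
abbreviation "CHKRWX \<equiv> nstates M + 9"
abbreviation "SYNC1 \<equiv> nstates M + 10"
abbreviation "SYNC2 \<equiv> nstates M + 11"
abbreviation "SYNC3 \<equiv> nstates M + 12"

definition nt :: nat where "nt = ntapes M + 1 + 2*K + Nc"

lemma nt_simps[simp]: "iW < nt" "x < tM \<Longrightarrow> x < nt" "i < K \<Longrightarrow> iR i < nt" "i < K \<Longrightarrow> iD i < nt"
  "j < Nc \<Longrightarrow> iC j < nt" "tM < nt" "0 < nt" "1 < nt" "2 < nt" "3 < nt"
  "i < K \<Longrightarrow> Suc (ntapes M + i) < nt" "i < K \<Longrightarrow> Suc (ntapes M + K + i) < nt"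
  "j < Nc \<Longrightarrow> Suc (ntapes M + 2*K + j) < nt" "Suc 0 < nt"
  using ntapes_ge[of M] by (auto simp: nt_def)

definition enc :: "nat \<Rightarrow> nat" where
  "enc q = (if q = qhalt M then HALTs else if q = qquery M then QRY else q)"

definition dirL :: "sym list \<Rightarrow> nat \<Rightarrow> bool" where "dirL ss i = (ss ! iD i = S1)"
definition atEnd :: "sym list \<Rightarrow> nat \<Rightarrow> bool" where
  "atEnd ss i = (if dirL ss i then ss ! iR i = S0 else ss ! iR i = SBlank)"
definition expired :: "sym list \<Rightarrow> bool" where "expired ss = (\<forall>i<K. atEnd ss i)"
definition jj :: "sym list \<Rightarrow> nat" where "jj ss = (LEAST i. i < K \<and> \<not> atEnd ss i)"
definition keep :: "sym list \<Rightarrow> nat \<Rightarrow> sym \<times> dir" where "keep ss x = (ss ! x, Stay)"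

definition tickA :: "sym list \<Rightarrow> nat \<Rightarrow> sym \<times> dir" where
  "tickA ss x = (if isR x then (if x - (tM+1) = jj ss then (ss ! x, if dirL ss (jj ss) then MvL else MvR) else keep ss x)
     else if isD x then (if x - (tM+1+K) < jj ss then (if dirL ss (x - (tM+1+K)) then S0 else S1, Stay) else keep ss x)
     else keep ss x)"

definition simA :: "nat \<Rightarrow> sym list \<Rightarrow> nat \<Rightarrow> sym \<times> dir" where
  "simA q ss x = (if x < tM then snd (delta M q (take tM ss)) ! x else tickA ss x)"
definition "INIT0A ss x = (if x = iW \<or> isR x then (S0, MvR) else keep ss x)"
definition "INIT1A ss x = (if x = 0 then (ss ! 0, MvR) else if x = iW \<or> isR x then (S1, MvR) else keep ss x)"
definition "INITRWA ss x = (if x = 0 \<or> x = iW \<or> isR x then (ss ! x, MvL) else keep ss x)"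
definition "CHK0A ss x = (if x = iW then (ss ! x, MvR) else keep ss x)"
definition "SCANA ss x = (if x = 1 \<or> x = iW then (ss ! x, MvR) else keep ss x)"
definition "EXTA ss x = (if x = 1 then (ss ! 1, MvR) else if x = iW then (S1, MvR) else keep ss x)"
definition "RWA ss x = (if x = 1 \<or> x = iW then (ss ! x, MvL) else keep ss x)"
definition rr :: "sym list \<Rightarrow> nat" where "rr ss = (LEAST j. j < Nc \<and> ss ! iC j \<noteq> S1)"
definition "XA ss x = (if isD x then (S0, Stay) else if isC x \<and> x - (tM+1+2*K) = rr ss then (S1, Stay) else keep ss x)"
definition "SYNC1A ss x = (if isR x \<and> ss ! x \<noteq> S0 then (ss ! x, MvL) else keep ss x)"
definition "SYNC2A ss x = (if x = iW then (ss ! x, MvR) else if isR x then (ss ! iW, MvR) else keep ss x)"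
definition "SYNC3A ss x = (if x = iW \<or> isR x then (ss ! x, MvL) else keep ss x)"

definition mk :: "(nat \<Rightarrow> sym \<times> dir) \<Rightarrow> (sym \<times> dir) list" where "mk g = map g [0..<nt]"

definition deltaN :: "nat \<Rightarrow> sym list \<Rightarrow> nat \<times> (sym \<times> dir) list" where
  "deltaN q ss = (
   if q < nstates M then (if expired ss then (HALTs, mk (keep ss))
                          else (enc (fst (delta M q (take tM ss))), mk (simA q ss)))
   else if q = INIT0 then (INIT1, mk (INIT0A ss))
   else if q = INIT1 then (if ss ! 0 = SBlank then (INITRW, mk (keep ss)) else (INIT1, mk (INIT1A ss)))
   else if q = INITRW then (if ss ! iW = S0 then (enc (qstart M), mk (keep ss)) else (INITRW, mk (INITRWA ss)))
   else if q = CHK0 then (CHK1, mk (CHK0A ss))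
   else if q = CHK1 then (if ss ! 1 = SBlank then (CHKRW, mk (keep ss))
                          else if ss ! iW = SBlank then (CHK1X, mk (EXTA ss)) else (CHK1, mk (SCANA ss)))
   else if q = CHK1X then (if ss ! 1 = SBlank then (CHKRWX, mk (keep ss)) else (CHK1X, mk (EXTA ss)))
   else if q = CHKRW then (if ss ! iW = S0 then (if expired ss then (HALTs, mk (keep ss)) else (enc (qans M), mk (tickA ss)))
                           else (CHKRW, mk (RWA ss)))
   else if q = CHKRWX then (if ss ! iW = S0 then (if (\<forall>j<Nc. ss ! iC j = S1) then (HALTs, mk (keep ss)) else (SYNC1, mk (XA ss)))
                           else (CHKRWX, mk (RWA ss)))
   else if q = SYNC1 then (if (\<forall>i<K. ss ! iR i = S0) then (SYNC2, mk (keep ss)) else (SYNC1, mk (SYNC1A ss)))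
   else if q = SYNC2 then (if ss ! iW = SBlank then (SYNC3, mk (keep ss)) else (SYNC2, mk (SYNC2A ss)))
   else if q = SYNC3 then (if ss ! iW = S0 then (enc (qans M), mk (keep ss)) else (SYNC3, mk (SYNC3A ss)))
   else (HALTs, mk (keep ss)))"

definition N :: otm where
  "N = \<lparr>nwork = nwork M + 1 + 2*K + Nc, nstates = nstates M + 13, delta = deltaN,
        qstart = INIT0, qhalt = HALTs, qquery = QRY, qans = CHK0\<rparr>"

lemma N_simps[simp]: "nstates N = nstates M + 13" "delta N = deltaN" "qstart N = INIT0"
  "qhalt N = HALTs" "qquery N = QRY" "qans N = CHK0" "ntapes N = nt"
  by (simp_all add: N_def ntapes_def nt_def)

lemma tM_ge: "4 \<le> tM" by (rule ntapes_ge)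

lemma enc_lt: "q < nstates M \<Longrightarrow> enc q < nstates M + 13"
  by (simp add: enc_def)

lemma wfN: "wf_otm N"
proof -
  have M: "qstart M < nstates M" "qans M < nstates M"
    "\<And>q ss. q < nstates M \<Longrightarrow> length ss = tM \<Longrightarrow> fst (delta M q ss) < nstates M"
    using wfM by (auto simp: wf_otm_def)
  have "fst (deltaN q ss) < nstates M + 13 \<and> length (snd (deltaN q ss)) = nt"
    if "q < nstates M + 13" "length ss = nt" for q ss
    using that M enc_lt by (auto simp: deltaN_def mk_def Let_def)
  then show ?thesis by (auto simp: wf_otm_def)
qed

lemma stepN:
  assumes "q \<noteq> HALTs" "q \<noteq> QRY" "length ts = nt"
    "deltaN q (map (\<lambda>t. fst t (snd t)) ts) = (q', mk g)"
  shows "step N \<phi> (q, ts) = (q', map (\<lambda>i. act i (ts!i) (g i)) [0..<nt])"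
  using assms by (auto simp: step_def Let_def mk_def intro!: map_cong)

lemma stepQ: "step N \<phi> (QRY, ts) = (CHK0, ts[1 := (encode (\<phi> (content (ts!2))), 0)])"
  by (simp add: step_def)

lemma stepH: "step N \<phi> (HALTs, ts) = (HALTs, ts)"
  by (simp add: step_def)

lemma nth_new: "x < nt \<Longrightarrow> map (\<lambda>i. act i (ts!i) (g i)) [0..<nt] ! x = act x (ts!x) (g x)"
  by simp

end


context ext
begin

definition Cok :: "tape list \<Rightarrow> nat \<Rightarrow> bool" where
  "Cok ts r \<longleftrightarrow> r \<le> Nc \<and> (\<forall>j<Nc. snd (ts ! iC j) = 0 \<and> (fst (ts ! iC j) 0 = S1 \<longleftrightarrow> j < r))"
definition Rok :: "tape list \<Rightarrow> nat \<Rightarrow> bool" where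
  "Rok ts L \<longleftrightarrow> 1 \<le> L \<and> (\<forall>i<K. fst (ts ! iR i) = ruler L \<and> snd (ts ! iR i) \<le> L \<and> snd (ts ! iD i) = 0)"
definition mu :: "tape list \<Rightarrow> nat \<Rightarrow> nat" where
  "mu ts L = (\<Sum>i<K. (if fst (ts ! iD i) 0 = S1 then L - snd (ts ! iR i) else snd (ts ! iR i)) * (L+1)^i)"
definition Meq :: "tape list \<Rightarrow> tape list \<Rightarrow> bool" where
  "Meq ts us \<longleftrightarrow> (\<forall>i<tM. ts ! i = us ! i)"
definition Meq1 :: "tape list \<Rightarrow> tape list \<Rightarrow> nat \<Rightarrow> bool" where
  "Meq1 ts us h \<longleftrightarrow> (\<forall>i<tM. i \<noteq> 1 \<longrightarrow> ts ! i = us ! i) \<and> ts ! 1 = (fst (us ! 1), h)"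

definition Gam :: "nat \<Rightarrow> nat" where "Gam L = (L+1)^K - 1"
definition T :: "nat \<Rightarrow> nat" where "T L = 2*L+3"
definition X :: "nat \<Rightarrow> nat" where "X L = (K+4)*L+10"
definition Y :: "nat \<Rightarrow> nat" where "Y L = Gam L * T L + X L"

definition PI0 :: "str \<Rightarrow> nat \<Rightarrow> nat \<Rightarrow> tape list \<Rightarrow> bool" where
  "PI0 a n m ts \<longleftrightarrow> n = 0 \<and> m = 0 \<and> ts ! 0 = (encode a, 0) \<and> (\<forall>x. 0 < x \<and> x < nt \<longrightarrow> ts ! x = blankT)"

definition PI1 :: "str \<Rightarrow> nat \<Rightarrow> nat \<Rightarrow> tape list \<Rightarrow> bool" where
  "PI1 a n m ts \<longleftrightarrow> m = 0 \<and> (\<exists>p. p \<le> length a \<and> n = Suc p \<and> ts ! 0 = (encode a, p)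
     \<and> (\<forall>x. 0 < x \<and> x < tM \<longrightarrow> ts ! x = blankT) \<and> ts ! iW = (ruler (Suc p), Suc p)
     \<and> (\<forall>i<K. ts ! iR i = (ruler (Suc p), Suc p) \<and> ts ! iD i = blankT) \<and> (\<forall>j<Nc. ts ! iC j = blankT))"

definition PIRW :: "str \<Rightarrow> nat \<Rightarrow> nat \<Rightarrow> tape list \<Rightarrow> bool" where
  "PIRW a n m ts \<longleftrightarrow> m = 0 \<and> (\<exists>h. h \<le> Suc (length a) \<and> n + h = 2 * length a + 3 \<and> ts ! 0 = (encode a, h - 1)
     \<and> (\<forall>x. 0 < x \<and> x < tM \<longrightarrow> ts ! x = blankT) \<and> ts ! iW = (ruler (Suc (length a)), h)
     \<and> (\<forall>i<K. ts ! iR i = (ruler (Suc (length a)), h) \<and> ts ! iD i = blankT) \<and> (\<forall>j<Nc. ts ! iC j = blankT))"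

definition PAL :: "strfun \<Rightarrow> str \<Rightarrow> nat \<Rightarrow> nat \<Rightarrow> nat \<Rightarrow> tape list \<Rightarrow> bool" where
  "PAL \<phi> a n m q ts \<longleftrightarrow> fst (run M \<phi> a m) \<noteq> qhalt M \<and> q = enc (fst (run M \<phi> a m))
     \<and> Meq ts (snd (run M \<phi> a m)) \<and> ts ! iW = (ruler (Suc (lrev M \<phi> a m)), 0)
     \<and> Rok ts (Suc (lrev M \<phi> a m)) \<and> mu ts (Suc (lrev M \<phi> a m)) \<le> m
     \<and> (\<exists>r. Cok ts r \<and> card (lrev M \<phi> a ` {..m}) = Suc r
          \<and> n \<le> r * Y (Suc (lrev M \<phi> a m)) + X (Suc (lrev M \<phi> a m)) + mu ts (Suc (lrev M \<phi> a m)) * T (Suc (lrev M \<phi> a m)))"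

definition PH :: "strfun \<Rightarrow> str \<Rightarrow> nat \<Rightarrow> tape list \<Rightarrow> bool" where
  "PH \<phi> a m ts \<longleftrightarrow> Meq ts (snd (run M \<phi> a m)) \<and> (fst (run M \<phi> a m) = qhalt M \<or> \<phi> \<notin> A)
     \<and> card (lrev M \<phi> a ` {..m}) \<le> Nc + 2"

definition PW :: "strfun \<Rightarrow> str \<Rightarrow> nat \<Rightarrow> nat \<Rightarrow> str \<Rightarrow> nat \<Rightarrow> tape list \<Rightarrow> bool" where
  "PW \<phi> a m m0 b r ts \<longleftrightarrow> m = Suc m0 \<and> fst (run M \<phi> a m0) = qquery M \<and> qquery M \<noteq> qhalt M
     \<and> fst (run M \<phi> a m) = qans M \<and> snd (run M \<phi> a m) ! 1 = (encode b, 0)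
     \<and> lrev M \<phi> a m = max (lrev M \<phi> a m0) (length b) \<and> Rok ts (Suc (lrev M \<phi> a m0))
     \<and> mu ts (Suc (lrev M \<phi> a m0)) < m \<and> Cok ts r \<and> card (lrev M \<phi> a ` {..m0}) = Suc r"

definition B0 :: "tape list \<Rightarrow> nat \<Rightarrow> nat \<Rightarrow> nat" where
  "B0 ts r o0 = r * Y (Suc o0) + X (Suc o0) + mu ts (Suc o0) * T (Suc o0)"
definition BX :: "nat \<Rightarrow> nat \<Rightarrow> nat" where
  "BX r lb = r * Y (Suc lb) + X (Suc lb) + Gam (Suc lb) * T (Suc lb)"
definition BS :: "nat \<Rightarrow> nat \<Rightarrow> nat" where
  "BS r L = (r - 1) * Y L + X L + Gam L * T L"

definition PC0 :: "strfun \<Rightarrow> str \<Rightarrow> nat \<Rightarrow> nat \<Rightarrow> tape list \<Rightarrow> bool" where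
  "PC0 \<phi> a n m ts \<longleftrightarrow> (\<exists>m0 b r. PW \<phi> a m m0 b r ts \<and> Meq1 ts (snd (run M \<phi> a m)) 0
     \<and> ts ! iW = (ruler (Suc (lrev M \<phi> a m0)), 0) \<and> n \<le> B0 ts r (lrev M \<phi> a m0) + 1)"
definition PC1 :: "strfun \<Rightarrow> str \<Rightarrow> nat \<Rightarrow> nat \<Rightarrow> tape list \<Rightarrow> bool" where
  "PC1 \<phi> a n m ts \<longleftrightarrow> (\<exists>m0 b r p. PW \<phi> a m m0 b r ts \<and> p \<le> length b \<and> p \<le> lrev M \<phi> a m0
     \<and> Meq1 ts (snd (run M \<phi> a m)) p
     \<and> ts ! iW = (ruler (Suc (lrev M \<phi> a m0)), Suc p) \<and> n \<le> B0 ts r (lrev M \<phi> a m0) + 2 + p)"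
definition PCRW :: "strfun \<Rightarrow> str \<Rightarrow> nat \<Rightarrow> nat \<Rightarrow> tape list \<Rightarrow> bool" where
  "PCRW \<phi> a n m ts \<longleftrightarrow> (\<exists>m0 b r h. PW \<phi> a m m0 b r ts \<and> length b \<le> lrev M \<phi> a m0
     \<and> h \<le> Suc (length b) \<and> Meq1 ts (snd (run M \<phi> a m)) (h - 1)
     \<and> ts ! iW = (ruler (Suc (lrev M \<phi> a m0)), h) \<and> n + h \<le> B0 ts r (lrev M \<phi> a m0) + 4 + 2 * length b)"
definition PC1X :: "strfun \<Rightarrow> str \<Rightarrow> nat \<Rightarrow> nat \<Rightarrow> tape list \<Rightarrow> bool" where
  "PC1X \<phi> a n m ts \<longleftrightarrow> (\<exists>m0 b r p. PW \<phi> a m m0 b r ts \<and> lrev M \<phi> a m0 < p \<and> p \<le> length b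
     \<and> Meq1 ts (snd (run M \<phi> a m)) p
     \<and> ts ! iW = (ruler (Suc p), Suc p) \<and> n \<le> BX r (length b) + 2 + p)"
definition PCRWX :: "strfun \<Rightarrow> str \<Rightarrow> nat \<Rightarrow> nat \<Rightarrow> tape list \<Rightarrow> bool" where
  "PCRWX \<phi> a n m ts \<longleftrightarrow> (\<exists>m0 b r h. PW \<phi> a m m0 b r ts \<and> lrev M \<phi> a m0 < length b
     \<and> h \<le> Suc (length b) \<and> Meq1 ts (snd (run M \<phi> a m)) (h - 1)
     \<and> ts ! iW = (ruler (Suc (length b)), h) \<and> n + h \<le> BX r (length b) + 4 + 2 * length b)"

definition PS :: "strfun \<Rightarrow> str \<Rightarrow> nat \<Rightarrow> nat \<Rightarrow> tape list \<Rightarrow> bool" where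
  "PS \<phi> a m r ts \<longleftrightarrow> fst (run M \<phi> a m) = qans M \<and> Meq ts (snd (run M \<phi> a m))
     \<and> (\<forall>i<K. snd (ts ! iD i) = 0 \<and> fst (ts ! iD i) 0 = S0) \<and> Cok ts r \<and> 1 \<le> r
     \<and> card (lrev M \<phi> a ` {..m}) = Suc r"

definition PS1 :: "strfun \<Rightarrow> str \<Rightarrow> nat \<Rightarrow> nat \<Rightarrow> tape list \<Rightarrow> bool" where
  "PS1 \<phi> a n m ts \<longleftrightarrow> (\<exists>r Lo L. L = Suc (lrev M \<phi> a m) \<and> PS \<phi> a m r ts \<and> ts ! iW = (ruler L, 0)
     \<and> 1 \<le> Lo \<and> Lo \<le> L \<and> (\<forall>i<K. fst (ts ! iR i) = ruler Lo \<and> snd (ts ! iR i) \<le> Lo)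
     \<and> n + (\<Sum>i<K. snd (ts ! iR i)) \<le> BS r L + 2 * L + 3 + K * L)"
definition PS2 :: "strfun \<Rightarrow> str \<Rightarrow> nat \<Rightarrow> nat \<Rightarrow> tape list \<Rightarrow> bool" where
  "PS2 \<phi> a n m ts \<longleftrightarrow> (\<exists>r Lo L h. L = Suc (lrev M \<phi> a m) \<and> PS \<phi> a m r ts \<and> h \<le> L
     \<and> ts ! iW = (ruler L, h) \<and> 1 \<le> Lo \<and> Lo \<le> L \<and> (\<forall>i<K. ts ! iR i = (mixr L Lo h, h))
     \<and> n \<le> BS r L + 2 * L + 4 + K * L + h)"
definition PS3 :: "strfun \<Rightarrow> str \<Rightarrow> nat \<Rightarrow> nat \<Rightarrow> tape list \<Rightarrow> bool" where
  "PS3 \<phi> a n m ts \<longleftrightarrow> (\<exists>r L h. L = Suc (lrev M \<phi> a m) \<and> PS \<phi> a m r ts \<and> h \<le> L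
     \<and> ts ! iW = (ruler L, h) \<and> (\<forall>i<K. ts ! iR i = (ruler L, h))
     \<and> n + h \<le> BS r L + 4 * L + 5 + K * L)"

definition MI :: "strfun \<Rightarrow> str \<Rightarrow> nat \<Rightarrow> nat \<Rightarrow> nat \<Rightarrow> tape list \<Rightarrow> bool" where
  "MI \<phi> a n m q ts \<longleftrightarrow>
     (q = INIT0 \<and> PI0 a n m ts) \<or> (q = INIT1 \<and> PI1 a n m ts) \<or> (q = INITRW \<and> PIRW a n m ts)
   \<or> ((q < nstates M \<or> q = QRY) \<and> PAL \<phi> a n m q ts) \<or> (q = HALTs \<and> PH \<phi> a m ts)
   \<or> (q = CHK0 \<and> PC0 \<phi> a n m ts) \<or> (q = CHK1 \<and> PC1 \<phi> a n m ts) \<or> (q = CHKRW \<and> PCRW \<phi> a n m ts)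
   \<or> (q = CHK1X \<and> PC1X \<phi> a n m ts) \<or> (q = CHKRWX \<and> PCRWX \<phi> a n m ts)
   \<or> (q = SYNC1 \<and> PS1 \<phi> a n m ts) \<or> (q = SYNC2 \<and> PS2 \<phi> a n m ts) \<or> (q = SYNC3 \<and> PS3 \<phi> a n m ts)"

definition Inv :: "strfun \<Rightarrow> str \<Rightarrow> nat \<Rightarrow> nat \<Rightarrow> config \<Rightarrow> bool" where
  "Inv \<phi> a n l c \<longleftrightarrow> length (snd c) = nt \<and> (\<exists>m. l = lrev M \<phi> a m \<and> MI \<phi> a n m (fst c) (snd c))"

lemma new_keep: "x < nt \<Longrightarrow> length ts = nt \<Longrightarrow> g x = keep (map (\<lambda>t. fst t (snd t)) ts) x \<Longrightarrow>
   map (\<lambda>i. act i (ts!i) (g i)) [0..<nt] ! x = ts ! x"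
  by (simp add: keep_def)

lemma new_len: "length (map (\<lambda>i. act i (ts!i) (g i)) [0..<nt]) = nt" by simp

lemma new_ans: "fst (map (\<lambda>i. act i (ts!i) (g i)) [0..<nt] ! 1) = fst (ts ! 1)"
  using nt_simps(8) by (simp del: nt_simps)

lemma ans_bound: "fst (ts ! 1) = fst (snd (run M \<phi> a m) ! 1) \<Longrightarrow> length (content (ts ! 1)) \<le> lrev M \<phi> a m"
  using ans_le[of M \<phi> a m] content_fst[of "ts ! 1" "snd (run M \<phi> a m) ! 1"] by simp

end


context ext
begin

lemma act_keep_ss[simp]: "x < length ts \<Longrightarrow> act x (ts!x) (keep (map (\<lambda>t. fst t (snd t)) ts) x) = ts!x"
  by (simp add: keep_def)

lemma blankT_simps[simp]: "fst blankT = (\<lambda>_. SBlank)" "snd blankT = 0"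
  by (simp_all add: blankT_def)

lemma content_blankT[simp]: "content blankT = []"
  by (simp add: blankT_def)

lemma step_I0:
  assumes len: "length ts = nt" and P: "PI0 a n m ts"
  shows "Inv \<phi> a (Suc n) (max (lrev M \<phi> a m) (length (content (snd (step N \<phi> (INIT0, ts)) ! 1)))) (step N \<phi> (INIT0, ts))"
proof -
  from P have n: "n = 0" "m = 0" and t0: "ts ! 0 = (encode a, 0)"
    and tb: "\<And>x. 0 < x \<Longrightarrow> x < nt \<Longrightarrow> ts ! x = blankT" by (auto simp: PI0_def)
  define ss where "ss = map (\<lambda>t. fst t (snd t)) ts"
  have d: "deltaN INIT0 ss = (INIT1, mk (INIT0A ss))" by (simp add: deltaN_def)
  define ts' where "ts' = map (\<lambda>i. act i (ts!i) (INIT0A ss i)) [0..<nt]"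
  have st: "step N \<phi> (INIT0, ts) = (INIT1, ts')" unfolding ts'_def
    by (rule stepN) (use d len ss_def in auto)
  have l: "length ts' = nt" by (simp add: ts'_def)
  have new: "\<And>x. x < nt \<Longrightarrow> ts' ! x = act x (ts!x) (INIT0A ss x)" by (simp add: ts'_def)
  have kp: "\<And>x. x < nt \<Longrightarrow> act x (ts!x) (keep ss x) = ts ! x" using len by (simp add: ss_def)
  have K: "\<And>x. x < nt \<Longrightarrow> INIT0A ss x = keep ss x \<Longrightarrow> ts' ! x = ts ! x" using new kp by simp
  have "ts' ! 0 = (encode a, 0)" using K[of 0] t0 tM_ge by (simp add: INIT0A_def)
  moreover have "\<forall>x. 0 < x \<and> x < tM \<longrightarrow> ts' ! x = blankT"
    using K tb tM_ge by (auto simp: INIT0A_def)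
  moreover have wr: "\<And>x. x = iW \<or> isR x \<Longrightarrow> x < nt \<Longrightarrow> ts' ! x = (ruler 1, 1)"
  proof -
    fix x assume "x = iW \<or> isR x" "x < nt"
    then have "ts' ! x = act x blankT (S0, MvR)" "2 \<le> x" using new tb tM_ge by (auto simp: INIT0A_def)
    then show "ts' ! x = (ruler 1, 1)" by (simp add: act_hi ruler_1)
  qed
  moreover have "\<forall>i<K. ts' ! iR i = (ruler 1, 1) \<and> ts' ! iD i = blankT"
  proof (intro allI impI conjI)
    fix i assume i: "i < K"
    show "ts' ! iR i = (ruler 1, 1)" using wr[of "iR i"] i by simp
    show "ts' ! iD i = blankT" using K[of "iD i"] tb[of "iD i"] i by (simp add: INIT0A_def)
  qed
  moreover have "\<forall>j<Nc. ts' ! iC j = blankT"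
    using K tb tM_ge by (auto simp: INIT0A_def)
  moreover have "content (ts' ! 1) = []" using K[of 1] tb[of 1] tM_ge by (simp add: INIT0A_def)
  ultimately show ?thesis using st l n wr[of iW]
    by (simp add: Inv_def MI_def PI1_def) 
qed

end


context ext
begin

lemma inv_intro: "length ts = nt \<Longrightarrow> MI \<phi> a n m q ts \<Longrightarrow> l = lrev M \<phi> a m \<Longrightarrow> Inv \<phi> a n l (q, ts)"
  by (auto simp: Inv_def)

lemma encode_blank_iff: "encode a p = SBlank \<longleftrightarrow> length a \<le> p"
  by (simp add: encode_def)

lemma step_I1:
  assumes len: "length ts = nt" and P: "PI1 a n m ts"
  shows "Inv \<phi> a (Suc n) (max (lrev M \<phi> a m) (length (content (snd (step N \<phi> (INIT1, ts)) ! 1)))) (step N \<phi> (INIT1, ts))"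
proof -
  from P obtain p where m: "m = 0" and p: "p \<le> length a" "n = Suc p" and t0: "ts ! 0 = (encode a, p)"
    and tb: "\<forall>x. 0 < x \<and> x < tM \<longrightarrow> ts ! x = blankT" and tw: "ts ! iW = (ruler (Suc p), Suc p)"
    and tr: "\<forall>i<K. ts ! iR i = (ruler (Suc p), Suc p) \<and> ts ! iD i = blankT"
    and tc: "\<forall>j<Nc. ts ! iC j = blankT" unfolding PI1_def by blast
  define ss where "ss = map (\<lambda>t. fst t (snd t)) ts"
  have ssx: "\<And>x. x < nt \<Longrightarrow> ss ! x = fst (ts!x) (snd (ts!x))" using len by (simp add: ss_def)
  have kp: "\<And>x. x < nt \<Longrightarrow> act x (ts!x) (keep ss x) = ts ! x" using len by (simp add: ss_def)
  have ans: "ts ! 1 = blankT" using tb tM_ge by auto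
  show ?thesis
  proof (cases "p = length a")
    case True
    then have "ss ! 0 = SBlank" using ssx[of 0] t0 by (simp add: encode_blank_iff)
    then have d: "deltaN INIT1 ss = (INITRW, mk (keep ss))" by (simp add: deltaN_def)
    have st: "step N \<phi> (INIT1, ts) = (INITRW, map (\<lambda>i. act i (ts!i) (keep ss i)) [0..<nt])"
      by (rule stepN) (use d len ss_def in auto)
    have "map (\<lambda>i. act i (ts!i) (keep ss i)) [0..<nt] = ts"
      using kp len by (intro nth_equalityI) auto
    then have st': "step N \<phi> (INIT1, ts) = (INITRW, ts)" using st by simp
    have "PIRW a (Suc n) 0 ts" unfolding PIRW_def
      using True p t0 tb tw tr tc by (intro conjI exI[of _ "Suc p"]) auto
    then show ?thesis using st' len m ans by (auto simp: MI_def intro!: inv_intro[where m=0])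
  next
    case False
    then have pl: "p < length a" using p by simp
    then have "ss ! 0 \<noteq> SBlank" using ssx[of 0] t0 by (simp add: encode_blank_iff)
    then have d: "deltaN INIT1 ss = (INIT1, mk (INIT1A ss))" by (simp add: deltaN_def)
    define ts' where "ts' = map (\<lambda>i. act i (ts!i) (INIT1A ss i)) [0..<nt]"
    have st: "step N \<phi> (INIT1, ts) = (INIT1, ts')" unfolding ts'_def
      by (rule stepN) (use d len ss_def in auto)
    have l: "length ts' = nt" by (simp add: ts'_def)
    have new: "\<And>x. x < nt \<Longrightarrow> ts' ! x = act x (ts!x) (INIT1A ss x)" by (simp add: ts'_def)
    have K: "\<And>x. x < nt \<Longrightarrow> INIT1A ss x = keep ss x \<Longrightarrow> ts' ! x = ts ! x" using new kp by simp
    have wr: "\<And>x. x = iW \<or> isR x \<Longrightarrow> x < nt \<Longrightarrow> ts ! x = (ruler (Suc p), Suc p) \<Longrightarrow> ts' ! x = (ruler (Suc (Suc p)), Suc (Suc p))"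
    proof -
      fix x assume "x = iW \<or> isR x" "x < nt" "ts ! x = (ruler (Suc p), Suc p)"
      then have "ts' ! x = act x (ruler (Suc p), Suc p) (S1, MvR)" "2 \<le> x" using new tM_ge by (auto simp: INIT1A_def)
      then show "ts' ! x = (ruler (Suc (Suc p)), Suc (Suc p))" by (simp add: act_hi ruler_ext)
    qed
    have "ts' ! 0 = (encode a, Suc p)" using new[of 0] t0 tM_ge by (simp add: INIT1A_def act_lo)
    moreover have "\<forall>x. 0 < x \<and> x < tM \<longrightarrow> ts' ! x = blankT"
      using K tb tM_ge by (auto simp: INIT1A_def)
    moreover have "ts' ! iW = (ruler (Suc (Suc p)), Suc (Suc p))" using wr[of iW] tw by simp
    moreover have "\<forall>i<K. ts' ! iR i = (ruler (Suc (Suc p)), Suc (Suc p)) \<and> ts' ! iD i = blankT"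
    proof (intro allI impI conjI)
      fix i assume i: "i < K"
      show "ts' ! iR i = (ruler (Suc (Suc p)), Suc (Suc p))" using wr[of "iR i"] i tr by simp
      show "ts' ! iD i = blankT" using K[of "iD i"] tr i by (simp add: INIT1A_def)
    qed
    moreover have "\<forall>j<Nc. ts' ! iC j = blankT"
      using K tc tM_ge by (auto simp: INIT1A_def)
    moreover have "content (ts' ! 1) = []" using K[of 1] ans tM_ge by (simp add: INIT1A_def)
    ultimately show ?thesis using st l p pl m
      by (simp add: Inv_def MI_def PI1_def) 
  qed
qed

lemma initial_M: "snd (run M \<phi> a 0) ! 0 = (encode a, 0)"
   "0 < x \<Longrightarrow> x < tM \<Longrightarrow> snd (run M \<phi> a 0) ! x = blankT"
   "fst (run M \<phi> a 0) = qstart M"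
  using tM_ge by (auto simp: run_0 initial_def blankT_def nth_Cons')

lemma qstart_lt: "qstart M < nstates M" using wfM by (simp add: wf_otm_def)

lemma Gam_bound: "Rok ts L \<Longrightarrow> mu ts L \<le> Gam L"
proof -
  assume R: "Rok ts L"
  let ?v = "\<lambda>i. (if fst (ts ! iD i) 0 = S1 then L - snd (ts ! iR i) else snd (ts ! iR i))"
  have "\<forall>i<K. ?v i \<le> L" using R by (auto simp: Rok_def)
  from mu_le_abs[OF this] show ?thesis by (simp add: mu_def Gam_def)
qed

lemma step_IRW:
  assumes len: "length ts = nt" and P: "PIRW a n m ts"
  shows "Inv \<phi> a (Suc n) (max (lrev M \<phi> a m) (length (content (snd (step N \<phi> (INITRW, ts)) ! 1)))) (step N \<phi> (INITRW, ts))"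
proof -
  from P obtain h where m: "m = 0" and h: "h \<le> Suc (length a)" "n + h = 2 * length a + 3" and t0: "ts ! 0 = (encode a, h - 1)"
    and tb: "\<forall>x. 0 < x \<and> x < tM \<longrightarrow> ts ! x = blankT" and tw: "ts ! iW = (ruler (Suc (length a)), h)"
    and tr: "\<forall>i<K. ts ! iR i = (ruler (Suc (length a)), h) \<and> ts ! iD i = blankT"
    and tc: "\<forall>j<Nc. ts ! iC j = blankT" unfolding PIRW_def by blast
  define ss where "ss = map (\<lambda>t. fst t (snd t)) ts"
  have ssx: "\<And>x. x < nt \<Longrightarrow> ss ! x = fst (ts!x) (snd (ts!x))" using len by (simp add: ss_def)
  have kp: "\<And>x. x < nt \<Longrightarrow> act x (ts!x) (keep ss x) = ts ! x" using len by (simp add: ss_def)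
  have ans: "ts ! 1 = blankT" using tb tM_ge by auto
  show ?thesis
  proof (cases "h = 0")
    case True
    then have "ss ! iW = S0" using ssx[of iW] tw by (simp add: ruler_def)
    then have d: "deltaN INITRW ss = (enc (qstart M), mk (keep ss))" by (simp add: deltaN_def)
    have st: "step N \<phi> (INITRW, ts) = (enc (qstart M), map (\<lambda>i. act i (ts!i) (keep ss i)) [0..<nt])"
      by (rule stepN) (use d len ss_def in auto)
    have "map (\<lambda>i. act i (ts!i) (keep ss i)) [0..<nt] = ts"
      using kp len by (intro nth_equalityI) auto
    then have st': "step N \<phi> (INITRW, ts) = (enc (qstart M), ts)" using st by simp
    have meq: "Meq ts (snd (run M \<phi> a 0))"
      unfolding Meq_def using initial_M t0 tb True by (metis diff_0_eq_0 gr0I)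
    have card: "card (lrev M \<phi> a ` {..0}) = 1" by simp
    have mu0: "mu ts (Suc (length a)) = 0" using tr True by (simp add: mu_def)
    have rok: "Rok ts (Suc (length a))" using tr True by (simp add: Rok_def)
    have cok: "Cok ts 0" using tc by (simp add: Cok_def)
    have bnd: "Suc n \<le> 0 * Y (Suc (length a)) + X (Suc (length a)) + 0 * T (Suc (length a))"
    proof -
      have "4 * Suc (length a) \<le> (K+4) * Suc (length a)" by (rule mult_le_mono1) simp
      then show ?thesis using h True unfolding X_def by simp
    qed
    show ?thesis
    proof (cases "qstart M = qhalt M")
      case True
      then have "enc (qstart M) = HALTs" by (simp add: enc_def)
      moreover have "PH \<phi> a 0 ts" using meq True by (simp add: PH_def initial_M)
      ultimately show ?thesis using st' len m ans by (auto simp: MI_def intro!: inv_intro[where m=0])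
    next
      case False
      have q: "enc (qstart M) < nstates M \<or> enc (qstart M) = QRY" using qstart_lt False by (simp add: enc_def)
      have "PAL \<phi> a (Suc n) 0 (enc (qstart M)) ts"
        unfolding PAL_def using False meq tw True rok mu0 cok bnd
        by (simp add: initial_M)
      then show ?thesis using st' len m ans q by (auto simp: MI_def intro!: inv_intro[where m=0])
    qed
  next
    case False
    then have "ss ! iW \<noteq> S0" using ssx[of iW] tw by (simp add: ruler_def)
    then have d: "deltaN INITRW ss = (INITRW, mk (INITRWA ss))" by (simp add: deltaN_def)
    define ts' where "ts' = map (\<lambda>i. act i (ts!i) (INITRWA ss i)) [0..<nt]"
    have st: "step N \<phi> (INITRW, ts) = (INITRW, ts')" unfolding ts'_def
      by (rule stepN) (use d len ss_def in auto)
    have l: "length ts' = nt" by (simp add: ts'_def)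
    have new: "\<And>x. x < nt \<Longrightarrow> ts' ! x = act x (ts!x) (INITRWA ss x)" by (simp add: ts'_def)
    have K: "\<And>x. x < nt \<Longrightarrow> INITRWA ss x = keep ss x \<Longrightarrow> ts' ! x = ts ! x" using new kp by simp
    have wr: "\<And>x. x = iW \<or> isR x \<Longrightarrow> x < nt \<Longrightarrow> ts ! x = (ruler (Suc (length a)), h) \<Longrightarrow> ts' ! x = (ruler (Suc (length a)), h - 1)"
    proof -
      fix x assume "x = iW \<or> isR x" "x < nt" "ts ! x = (ruler (Suc (length a)), h)"
      then have "ts' ! x = act x (ruler (Suc (length a)), h) (ruler (Suc (length a)) h, MvL)" "2 \<le> x"
        using new ssx tM_ge by (auto simp: INITRWA_def)
      then show "ts' ! x = (ruler (Suc (length a)), h - 1)" by (simp add: act_hi)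
    qed
    have "ts' ! 0 = (encode a, h - 1 - 1)" using new[of 0] t0 tM_ge by (simp add: INITRWA_def act_lo)
    moreover have "\<forall>x. 0 < x \<and> x < tM \<longrightarrow> ts' ! x = blankT"
      using K tb tM_ge by (auto simp: INITRWA_def)
    moreover have "ts' ! iW = (ruler (Suc (length a)), h - 1)" using wr[of iW] tw by simp
    moreover have "\<forall>i<K. ts' ! iR i = (ruler (Suc (length a)), h - 1) \<and> ts' ! iD i = blankT"
    proof (intro allI impI conjI)
      fix i assume i: "i < K"
      show "ts' ! iR i = (ruler (Suc (length a)), h - 1)" using wr[of "iR i"] i tr by simp
      show "ts' ! iD i = blankT" using K[of "iD i"] tr i by (simp add: INITRWA_def)
    qed
    moreover have "\<forall>j<Nc. ts' ! iC j = blankT"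
      using K tc tM_ge by (auto simp: INITRWA_def)
    moreover have "content (ts' ! 1) = []" using K[of 1] ans tM_ge by (simp add: INITRWA_def)
    ultimately show ?thesis using st l h m False
      unfolding Inv_def MI_def PIRW_def by (intro conjI disjI1 exI[of _ 0] exI[of _ "h - 1"] disjI2) auto
  qed
qed

end


context ext
begin

lemma atEnd_iff:
  assumes len: "length ts = nt" and R: "Rok ts L" and i: "i < K"
  shows "atEnd (map (\<lambda>t. fst t (snd t)) ts) i \<longleftrightarrow>
    (if fst (ts ! iD i) 0 = S1 then L - snd (ts ! iR i) else snd (ts ! iR i)) = L"
proof -
  from R i have L: "1 \<le> L" and f: "fst (ts ! iR i) = ruler L" and p: "snd (ts ! iR i) \<le> L"
    and dh: "snd (ts ! iD i) = 0" by (auto simp: Rok_def)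
  have r1: "map (\<lambda>t. fst t (snd t)) ts ! iR i = ruler L (snd (ts ! iR i))" using len i f by simp
  have r2: "map (\<lambda>t. fst t (snd t)) ts ! iD i = fst (ts ! iD i) 0" using len i dh by simp
  show ?thesis using r1 r2 p L
    by (auto simp: atEnd_def dirL_def ruler_S0_iff ruler_Blank_iff)
qed

lemma expired_mu:
  assumes len: "length ts = nt" and R: "Rok ts L" and E: "expired (map (\<lambda>t. fst t (snd t)) ts)"
  shows "mu ts L = Gam L"
proof -
  have "\<forall>i<K. (if fst (ts ! iD i) 0 = S1 then L - snd (ts ! iR i) else snd (ts ! iR i)) = L"
    using E atEnd_iff[OF len R] by (auto simp: expired_def)
  from mu_full_abs[OF this] show ?thesis by (simp add: mu_def Gam_def)
qed

lemma tick_lemma: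
  assumes len: "length ts = nt" and R: "Rok ts L" and E: "\<not> expired (map (\<lambda>t. fst t (snd t)) ts)"
    and g: "\<And>x. x < nt \<Longrightarrow> isR x \<or> isD x \<Longrightarrow> g x = tickA (map (\<lambda>t. fst t (snd t)) ts) x"
    and ts': "ts' = map (\<lambda>i. act i (ts!i) (g i)) [0..<nt]"
  shows "Rok ts' L \<and> mu ts' L = Suc (mu ts L)"
proof -
  define ss where "ss = map (\<lambda>t. fst t (snd t)) ts"
  define p where "p i = snd (ts ! iR i)" for i
  define d where "d i = (fst (ts ! iD i) 0 = S1)" for i
  define v where "v i = (if d i then L - p i else p i)" for i
  have L: "1 \<le> L" using R by (simp add: Rok_def)
  have f: "\<And>i. i < K \<Longrightarrow> fst (ts ! iR i) = ruler L" "\<And>i. i < K \<Longrightarrow> p i \<le> L"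
    "\<And>i. i < K \<Longrightarrow> snd (ts ! iD i) = 0" using R by (auto simp: Rok_def p_def)
  have ae: "\<And>i. i < K \<Longrightarrow> atEnd ss i \<longleftrightarrow> v i = L"
    using atEnd_iff[OF len R] by (simp add: ss_def v_def d_def p_def)
  have ssR: "\<And>i. i < K \<Longrightarrow> ss ! iR i = ruler L (p i)" using len f by (simp add: ss_def p_def)
  have ssD: "\<And>i. i < K \<Longrightarrow> dirL ss i = d i" using len f by (simp add: ss_def d_def dirL_def)
  define j where "j = jj ss"
  have ex: "\<exists>i. i < K \<and> \<not> atEnd ss i" using E by (auto simp: expired_def ss_def)
  have j: "j < K" "\<not> atEnd ss j" using LeastI_ex[OF ex] by (auto simp: j_def jj_def)
  have jm: "\<And>i. i < j \<Longrightarrow> atEnd ss i" using not_less_Least j(1) by (fastforce simp: j_def jj_def)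
  have new: "\<And>x. x < nt \<Longrightarrow> ts' ! x = act x (ts!x) (g x)" by (simp add: ts')
  have tR: "\<And>i. i < K \<Longrightarrow> ts' ! iR i = (ruler L, if i = j then (if d j then p j - 1 else Suc (p j)) else p i)"
  proof -
    fix i assume i: "i < K"
    have "ts' ! iR i = act (iR i) (ts ! iR i) (tickA ss (iR i))" using new[of "iR i"] g[of "iR i"] i by (simp add: ss_def)
    also have "\<dots> = (ruler L, if i = j then (if d j then p j - 1 else Suc (p j)) else p i)"
      using i f[of i] ssR[of i] ssD[of i] ssD[of j] j(1) len tM_ge
      by (cases "ts ! iR i") (auto simp: tickA_def j_def keep_def act_hi p_def ss_def)
    finally show "ts' ! iR i = \<dots>" .
  qed
  have tD: "\<And>i. i < K \<Longrightarrow> snd (ts' ! iD i) = 0 \<and> (fst (ts' ! iD i) 0 = S1 \<longleftrightarrow> (if i < j then \<not> d i else d i))"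
  proof -
    fix i assume i: "i < K"
    have "ts' ! iD i = act (iD i) (ts ! iD i) (tickA ss (iD i))" using new[of "iD i"] g[of "iD i"] i by (simp add: ss_def)
    then show "snd (ts' ! iD i) = 0 \<and> (fst (ts' ! iD i) 0 = S1 \<longleftrightarrow> (if i < j then \<not> d i else d i))"
      using i f(3)[of i] ssD[of i] len tM_ge
      by (cases "ts ! iD i") (auto simp: tickA_def j_def keep_def act_hi d_def ss_def)
  qed
  define p' where "p' i = (if i = j then (if d j then p j - 1 else Suc (p j)) else p i)" for i
  define d' where "d' i = (if i < j then \<not> d i else d i)" for i
  define v' where "v' i = (if d' i then L - p' i else p' i)" for i
  have vj: "v j \<noteq> L" using ae j by auto
  have pj: "d j \<Longrightarrow> 0 < p j" "\<not> d j \<Longrightarrow> p j < L" using vj f(2)[OF j(1)] by (auto simp: v_def)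
  have a1: "\<forall>i<j. v i = L" using jm ae j(1) by auto
  have a2: "\<forall>i<j. v' i = 0"
  proof (intro allI impI)
    fix i assume "i < j"
    then have "v i = L" "i \<noteq> j" "i < K" using a1 j(1) by auto
    then show "v' i = 0" using f(2)[of i] by (auto simp: v'_def v_def d'_def p'_def \<open>i < j\<close>)
  qed
  have a3: "v' j = Suc (v j)" using pj f(2)[OF j(1)] by (auto simp: v'_def v_def d'_def p'_def)
  have a4: "\<forall>i. j < i \<and> i < K \<longrightarrow> v' i = v i" by (auto simp: v'_def v_def d'_def p'_def)
  have mu': "mu ts' L = (\<Sum>i<K. v' i * (L+1)^i)"
    unfolding mu_def using tR tD by (intro sum.cong) (auto simp: v'_def d'_def p'_def)
  have mu0: "mu ts L = (\<Sum>i<K. v i * (L+1)^i)"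
    unfolding mu_def v_def d_def p_def by (rule refl)
  have "mu ts' L = Suc (mu ts L)" using mu_tick_abs[OF j(1) a1 a2 a3 a4] mu' mu0 by simp
  moreover have "Rok ts' L"
  proof -
    have "snd (ts' ! iR i) \<le> L" if i: "i < K" for i
    proof -
      have "p i \<le> L" "p j \<le> L" using f(2) i j(1) by auto
      then show ?thesis using tR[OF i] pj by auto
    qed
    then show ?thesis unfolding Rok_def using L tR tD by auto
  qed
  ultimately show ?thesis by simp
qed

end


context ext
begin

lemma Cok_cong: "(\<forall>j<Nc. ts' ! iC j = ts ! iC j) \<Longrightarrow> Cok ts' r \<longleftrightarrow> Cok ts r"
  by (simp add: Cok_def)

lemma Rok_cong: "(\<forall>i<K. ts' ! iR i = ts ! iR i \<and> ts' ! iD i = ts ! iD i) \<Longrightarrow> Rok ts' L \<longleftrightarrow> Rok ts L"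
  by (simp add: Rok_def)

lemma mu_cong: "(\<forall>i<K. ts' ! iR i = ts ! iR i \<and> ts' ! iD i = ts ! iD i) \<Longrightarrow> mu ts' L = mu ts L"
  unfolding mu_def by (intro sum.cong) auto

lemma M_inv: "fst (run M \<phi> a m) < nstates M" "length (snd (run M \<phi> a m)) = tM"
  using M_run_inv[OF wfM] by auto

lemma M_step_nonq:
  assumes "run M \<phi> a m = (qM, tsM)" "qM \<noteq> qhalt M" "qM \<noteq> qquery M"
  shows "run M \<phi> a (Suc m) = (fst (delta M qM (map (\<lambda>t. fst t (snd t)) tsM)),
     map (\<lambda>i. act i (tsM!i) (snd (delta M qM (map (\<lambda>t. fst t (snd t)) tsM)) ! i)) [0..<tM])"
  using assms M_inv[of \<phi> a m] by (simp add: run_Suc step_def Let_def)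

lemma M_step_q:
  assumes "run M \<phi> a m = (qM, tsM)" "qM \<noteq> qhalt M" "qM = qquery M"
  shows "run M \<phi> a (Suc m) = (qans M, tsM[1 := (encode (\<phi> (content (tsM ! 2))), 0)])"
  using assms by (simp add: run_Suc step_def Let_def)

lemma lrev_nonq:
  assumes "fst (run M \<phi> a m) \<noteq> qhalt M" "fst (run M \<phi> a m) \<noteq> qquery M"
  shows "lrev M \<phi> a (Suc m) = lrev M \<phi> a m"
proof -
  obtain qM tsM where c: "run M \<phi> a m = (qM, tsM)" by (cases "run M \<phi> a m")
  have l: "length tsM = tM" using M_inv[of \<phi> a m] c by simp
  have "fst (snd (run M \<phi> a (Suc m)) ! 1) = fst (tsM ! 1)"
    using M_step_nonq[OF c] assms c l tM_ge by (simp add: act_def)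
  then have "content (snd (run M \<phi> a (Suc m)) ! 1) = content (snd (run M \<phi> a m) ! 1)"
    using c by (simp add: content_def)
  then show ?thesis using ans_le[of M \<phi> a m] by simp
qed

lemma card_same: "lrev M \<phi> a (Suc m) = lrev M \<phi> a m \<Longrightarrow> lrev M \<phi> a ` {..Suc m} = lrev M \<phi> a ` {..m}"
  by (auto simp: atMost_Suc)

lemma sc_use: "\<phi> \<in> A \<Longrightarrow> \<not> halted_at M \<phi> a m \<Longrightarrow> Suc m \<le> t (lrev M \<phi> a (Suc m))"
proof -
  assume "\<phi> \<in> A" "\<not> halted_at M \<phi> a m"
  then show ?thesis using scM time_ge[of M \<phi> a m] unfolding step_count_def by (metis lrev.simps(2))
qed

lemma t_Gam: "t x \<le> Gam (Suc x)"
proof -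
  have a: "t x < (x+2)^K" using tK by simp
  have "Gam (Suc x) = (x+2)^K - 1" by (simp add: Gam_def)
  then show ?thesis using a by linarith
qed

end


context ext
begin

lemma step_SIM:
  assumes len: "length ts = nt" and q: "q < nstates M" and P: "PAL \<phi> a n m q ts"
  shows "Inv \<phi> a (Suc n) (max (lrev M \<phi> a m) (length (content (snd (step N \<phi> (q, ts)) ! 1)))) (step N \<phi> (q, ts))"
proof -
  obtain qM tsM where c: "run M \<phi> a m = (qM, tsM)" by (cases "run M \<phi> a m")
  define L where "L = Suc (lrev M \<phi> a m)"
  from P c obtain r where nh: "qM \<noteq> qhalt M" and qe: "q = enc qM" and meq: "Meq ts tsM"
    and tw: "ts ! iW = (ruler L, 0)" and rok: "Rok ts L" and mum: "mu ts L \<le> m"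
    and cok: "Cok ts r" and card: "card (lrev M \<phi> a ` {..m}) = Suc r"
    and bnd: "n \<le> r * Y L + X L + mu ts L * T L"
    unfolding PAL_def L_def by auto
  have qq: "qM = q" "qM \<noteq> qquery M" using qe q nh by (auto simp: enc_def split: if_splits)
  have lM: "length tsM = tM" using M_inv(2)[of \<phi> a m] c by simp
  define ss where "ss = map (\<lambda>t. fst t (snd t)) ts"
  have ssx: "\<And>x. x < nt \<Longrightarrow> ss ! x = fst (ts!x) (snd (ts!x))" using len by (simp add: ss_def)
  have kp: "\<And>x. x < nt \<Longrightarrow> act x (ts!x) (keep ss x) = ts ! x" using len by (simp add: ss_def)
  have take: "take tM ss = map (\<lambda>t. fst t (snd t)) tsM"
    using meq len lM by (intro nth_equalityI) (auto simp: ss_def Meq_def)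
  define rM where "rM = delta M qM (map (\<lambda>t. fst t (snd t)) tsM)"
  have rMl: "fst rM < nstates M" "length (snd rM) = tM"
    using wfM M_inv(1)[of \<phi> a m] c lM by (auto simp: rM_def wf_otm_def)
  define tsM' where "tsM' = map (\<lambda>i. act i (tsM!i) (snd rM ! i)) [0..<tM]"
  have cM': "run M \<phi> a (Suc m) = (fst rM, tsM')"
    using M_step_nonq[OF c nh qq(2)] by (simp add: rM_def tsM'_def)
  have lr: "lrev M \<phi> a (Suc m) = lrev M \<phi> a m" using lrev_nonq[of \<phi> a m] c nh qq by simp
  have ansb: "length (content (ts ! 1)) \<le> lrev M \<phi> a m"
    using ans_bound[of ts \<phi> a m] meq c tM_ge by (simp add: Meq_def)
  have hq: "q \<noteq> HALTs" "q \<noteq> QRY" using q by auto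
  show ?thesis
  proof (cases "expired ss")
    case True
    then have d: "deltaN q ss = (HALTs, mk (keep ss))" using q by (simp add: deltaN_def)
    have st: "step N \<phi> (q, ts) = (HALTs, map (\<lambda>i. act i (ts!i) (keep ss i)) [0..<nt])"
      by (rule stepN) (use d len ss_def hq in auto)
    have "map (\<lambda>i. act i (ts!i) (keep ss i)) [0..<nt] = ts"
      using kp len by (intro nth_equalityI) auto
    then have st': "step N \<phi> (q, ts) = (HALTs, ts)" using st by simp
    have notA: "\<phi> \<notin> A"
    proof
      assume A: "\<phi> \<in> A"
      have "\<not> halted_at M \<phi> a m" using nh c by (simp add: halted_at_def)
      then have "Suc m \<le> t (lrev M \<phi> a (Suc m))" by (rule sc_use[OF A])
      then have "Suc m \<le> t (lrev M \<phi> a m)" by (simp only: lr)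
      also have "\<dots> \<le> Gam L" using t_Gam by (simp add: L_def)
      also have "\<dots> = mu ts L" using expired_mu[OF len rok] True by (simp add: ss_def)
      finally show False using mum by simp
    qed
    have "PH \<phi> a m ts" using meq c notA card cok by (simp add: PH_def Cok_def)
    then show ?thesis using st' len ansb by (auto simp: MI_def intro!: inv_intro[where m=m])
  next
    case False
    then have d: "deltaN q ss = (enc (fst rM), mk (simA q ss))" using q take qq by (simp add: deltaN_def rM_def)
    define ts' where "ts' = map (\<lambda>i. act i (ts!i) (simA q ss i)) [0..<nt]"
    have st: "step N \<phi> (q, ts) = (enc (fst rM), ts')" unfolding ts'_def
      by (rule stepN) (use d len ss_def hq in auto)
    have l: "length ts' = nt" by (simp add: ts'_def)
    have new: "\<And>x. x < nt \<Longrightarrow> ts' ! x = act x (ts!x) (simA q ss x)" by (simp add: ts'_def)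
    have K: "\<And>x. x < nt \<Longrightarrow> simA q ss x = keep ss x \<Longrightarrow> ts' ! x = ts ! x" using new kp by simp
    have tick: "Rok ts' L \<and> mu ts' L = Suc (mu ts L)"
      by (rule tick_lemma[OF len rok False[unfolded ss_def], of "simA q ss"])
         (auto simp: simA_def ss_def ts'_def)
    have meq': "Meq ts' tsM'"
      unfolding Meq_def
    proof (intro allI impI)
      fix i assume i: "i < tM"
      have "ts' ! i = act i (ts ! i) (snd rM ! i)" using new[of i] i take qq by (simp add: simA_def rM_def)
      then show "ts' ! i = tsM' ! i" using meq i by (simp add: tsM'_def Meq_def)
    qed
    have tw': "ts' ! iW = (ruler L, 0)" using K[of iW] tw by (simp add: simA_def tickA_def)
    have cok': "Cok ts' r" using cok K by (subst Cok_cong) (auto simp: simA_def tickA_def)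
    have ans': "content (ts' ! 1) = content (ts ! 1)" using l new tM_ge
      by (simp add: content_def act_def)
    have card': "card (lrev M \<phi> a ` {..Suc m}) = Suc r" using card card_same[OF lr] by simp
    have bnd': "Suc n \<le> r * Y L + X L + mu ts' L * T L" using bnd tick by (simp add: T_def)
    show ?thesis
    proof (cases "fst rM = qhalt M")
      case True
      then have e: "enc (fst rM) = HALTs" by (simp add: enc_def)
      have "PH \<phi> a (Suc m) ts'" using meq' cM' True card' cok by (simp add: PH_def Cok_def)
      then show ?thesis using st e l ans' ansb lr by (auto simp: MI_def intro!: inv_intro[where m="Suc m"])
    next
      case False
      have q': "enc (fst rM) < nstates M \<or> enc (fst rM) = QRY" using rMl False by (simp add: enc_def)
      have "PAL \<phi> a (Suc n) (Suc m) (enc (fst rM)) ts'"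
        unfolding PAL_def using cM' False meq' tw' tick mum cok' card' bnd' lr
        by (auto simp: L_def)
      then show ?thesis using st l ans' ansb lr q' by (auto simp: MI_def intro!: inv_intro[where m="Suc m"])
    qed
  qed
qed

end


context ext
begin

lemma PW_cong: "(\<forall>i<K. ts' ! iR i = ts ! iR i \<and> ts' ! iD i = ts ! iD i) \<Longrightarrow> (\<forall>j<Nc. ts' ! iC j = ts ! iC j) \<Longrightarrow>
   PW \<phi> a m m0 b r ts' \<longleftrightarrow> PW \<phi> a m m0 b r ts"
  unfolding PW_def using Rok_cong[of ts' ts] mu_cong[of ts' ts] Cok_cong[of ts' ts] by simp

lemma B0_cong: "(\<forall>i<K. ts' ! iR i = ts ! iR i \<and> ts' ! iD i = ts ! iD i) \<Longrightarrow> B0 ts' r o0 = B0 ts r o0"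
  unfolding B0_def using mu_cong[of ts' ts] by simp

lemma step_QRY:
  assumes len: "length ts = nt" and P: "PAL \<phi> a n m QRY ts"
  shows "Inv \<phi> a (Suc n) (max (lrev M \<phi> a m) (length (content (snd (step N \<phi> (QRY, ts)) ! 1)))) (step N \<phi> (QRY, ts))"
proof -
  obtain qM tsM where c: "run M \<phi> a m = (qM, tsM)" by (cases "run M \<phi> a m")
  define L where "L = Suc (lrev M \<phi> a m)"
  from P c obtain r where nh: "qM \<noteq> qhalt M" and qe: "QRY = enc qM" and meq: "Meq ts tsM"
    and tw: "ts ! iW = (ruler L, 0)" and rok: "Rok ts L" and mum: "mu ts L \<le> m"
    and cok: "Cok ts r" and card: "card (lrev M \<phi> a ` {..m}) = Suc r"
    and bnd: "n \<le> r * Y L + X L + mu ts L * T L"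
    unfolding PAL_def L_def by auto
  have lM: "length tsM = tM" using M_inv(2)[of \<phi> a m] c by simp
  have qq: "qM = qquery M" using qe nh M_inv(1)[of \<phi> a m] c by (auto simp: enc_def split: if_splits)
  define b where "b = \<phi> (content (tsM ! 2))"
  have t2: "ts ! 2 = tsM ! 2" using meq tM_ge by (simp add: Meq_def)
  define ts' where "ts' = ts[1 := (encode b, 0)]"
  have st: "step N \<phi> (QRY, ts) = (CHK0, ts')" using stepQ t2 by (simp add: ts'_def b_def)
  define tsM' where "tsM' = tsM[1 := (encode b, 0)]"
  have cM': "run M \<phi> a (Suc m) = (qans M, tsM')"
    using M_step_q[OF c nh qq] by (simp add: tsM'_def b_def)
  have l: "length ts' = nt" using len by (simp add: ts'_def)
  have same: "\<And>x. x \<noteq> 1 \<Longrightarrow> ts' ! x = ts ! x" by (simp add: ts'_def)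
  have t1: "ts' ! 1 = (encode b, 0)" using len by (simp add: ts'_def)
  have rdc: "\<forall>i<K. ts' ! iR i = ts ! iR i \<and> ts' ! iD i = ts ! iD i" "\<forall>j<Nc. ts' ! iC j = ts ! iC j"
    using same tM_ge by auto
  have lr: "lrev M \<phi> a (Suc m) = max (lrev M \<phi> a m) (length b)"
    using cM' lM tM_ge by (simp add: tsM'_def)
  have "PW \<phi> a (Suc m) m b r ts"
    unfolding PW_def using c qq nh cM' lM tM_ge lr rok mum cok card
    by (auto simp: tsM'_def L_def)
  then have pw: "PW \<phi> a (Suc m) m b r ts'" using PW_cong[OF rdc] by simp
  have meq1: "Meq1 ts' (snd (run M \<phi> a (Suc m))) 0"
    using meq same t1 cM' lM tM_ge by (auto simp: Meq1_def Meq_def tsM'_def)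
  have "PC0 \<phi> a (Suc n) (Suc m) ts'"
    unfolding PC0_def using pw meq1 same[of iW] tw bnd mu_cong[OF rdc(1)] tM_ge
    by (intro exI[of _ m], intro exI[of _ b], intro exI[of _ r]) (simp add: L_def B0_def)
  then show ?thesis using st l t1 lr by (auto simp: MI_def intro!: inv_intro[where m="Suc m"])
qed

lemma step_HALT:
  assumes len: "length ts = nt" and P: "PH \<phi> a m ts"
  shows "Inv \<phi> a (Suc n) (max (lrev M \<phi> a m) (length (content (snd (step N \<phi> (HALTs, ts)) ! 1)))) (step N \<phi> (HALTs, ts))"
proof -
  have "length (content (ts ! 1)) \<le> lrev M \<phi> a m"
    using P ans_bound[of ts \<phi> a m] tM_ge by (simp add: PH_def Meq_def)
  then show ?thesis using P len stepH[of \<phi> ts] by (auto simp: MI_def intro!: inv_intro[where m=m])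
qed

lemma step_CHK0:
  assumes len: "length ts = nt" and P: "PC0 \<phi> a n m ts"
  shows "Inv \<phi> a (Suc n) (max (lrev M \<phi> a m) (length (content (snd (step N \<phi> (CHK0, ts)) ! 1)))) (step N \<phi> (CHK0, ts))"
proof -
  from P obtain m0 b r where pw: "PW \<phi> a m m0 b r ts" and meq1: "Meq1 ts (snd (run M \<phi> a m)) 0"
    and tw: "ts ! iW = (ruler (Suc (lrev M \<phi> a m0)), 0)" and bnd: "n \<le> B0 ts r (lrev M \<phi> a m0) + 1"
    unfolding PC0_def by blast
  define ss where "ss = map (\<lambda>t. fst t (snd t)) ts"
  have kp: "\<And>x. x < nt \<Longrightarrow> act x (ts!x) (keep ss x) = ts ! x" using len by (simp add: ss_def)
  have d: "deltaN CHK0 ss = (CHK1, mk (CHK0A ss))" by (simp add: deltaN_def)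
  define ts' where "ts' = map (\<lambda>i. act i (ts!i) (CHK0A ss i)) [0..<nt]"
  have st: "step N \<phi> (CHK0, ts) = (CHK1, ts')" unfolding ts'_def
    by (rule stepN) (use d len ss_def in auto)
  have l: "length ts' = nt" by (simp add: ts'_def)
  have new: "\<And>x. x < nt \<Longrightarrow> ts' ! x = act x (ts!x) (CHK0A ss x)" by (simp add: ts'_def)
  have K: "\<And>x. x < nt \<Longrightarrow> CHK0A ss x = keep ss x \<Longrightarrow> ts' ! x = ts ! x" using new kp by simp
  have rdc: "\<forall>i<K. ts' ! iR i = ts ! iR i \<and> ts' ! iD i = ts ! iD i" "\<forall>j<Nc. ts' ! iC j = ts ! iC j"
    using K by (auto simp: CHK0A_def)
  have tw': "ts' ! iW = (ruler (Suc (lrev M \<phi> a m0)), 1)"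
    using new[of iW] tw len tM_ge by (simp add: CHK0A_def act_hi ss_def)
  have meq1': "Meq1 ts' (snd (run M \<phi> a m)) 0"
    using meq1 K tM_ge unfolding Meq1_def by (auto simp: CHK0A_def)
  have a1: "fst (ts' ! 1) = fst (ts ! 1)" using meq1 meq1' by (simp add: Meq1_def)
  have ansb: "length (content (ts' ! 1)) \<le> lrev M \<phi> a m"
    using ans_bound[of ts' \<phi> a m] meq1' by (simp add: Meq1_def)
  have pw': "PW \<phi> a m m0 b r ts'" using pw PW_cong[OF rdc] by simp
  have b0: "B0 ts' r (lrev M \<phi> a m0) = B0 ts r (lrev M \<phi> a m0)" using B0_cong[OF rdc(1)] by simp
  have "PC1 \<phi> a (Suc n) m ts'"
    unfolding PC1_def
    apply (rule exI[of _ m0], rule exI[of _ b], rule exI[of _ r], rule exI[of _ "0::nat"])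
    using pw' meq1' tw' bnd b0 by simp
  then show ?thesis using st l ansb by (auto simp: MI_def intro!: inv_intro[where m=m])
qed

end


context ext
begin

lemma Gam_mono: "L \<le> L' \<Longrightarrow> Gam L \<le> Gam L'"
  unfolding Gam_def by (intro diff_le_mono power_mono) auto
lemma T_mono: "L \<le> L' \<Longrightarrow> T L \<le> T L'" by (simp add: T_def)
lemma X_mono: "L \<le> L' \<Longrightarrow> X L \<le> X L'" by (simp add: X_def)
lemma Y_mono: "L \<le> L' \<Longrightarrow> Y L \<le> Y L'"
  unfolding Y_def by (intro add_mono mult_le_mono Gam_mono T_mono X_mono)

lemma B0_le_BX: "Rok ts (Suc o0) \<Longrightarrow> o0 \<le> lb \<Longrightarrow> B0 ts r o0 \<le> BX r lb"
proof -
  assume R: "Rok ts (Suc o0)" and le: "o0 \<le> lb"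
  have "mu ts (Suc o0) \<le> Gam (Suc lb)" using Gam_bound[OF R] Gam_mono[of "Suc o0" "Suc lb"] le by simp
  then show ?thesis unfolding B0_def BX_def using le
    by (intro add_mono mult_le_mono Y_mono X_mono T_mono) auto
qed

lemma Meq1_upd: "Meq1 ts us h \<Longrightarrow> (\<forall>i<tM. i \<noteq> 1 \<longrightarrow> ts' ! i = ts ! i) \<Longrightarrow> ts' ! 1 = (fst (ts ! 1), h') \<Longrightarrow> Meq1 ts' us h'"
  by (simp add: Meq1_def)

lemma PW_ans: "PW \<phi> a m m0 b r ts \<Longrightarrow> Meq1 ts (snd (run M \<phi> a m)) h \<Longrightarrow> ts ! 1 = (encode b, h)"
  unfolding PW_def Meq1_def by (metis fst_conv)

lemma step_CHK1:
  assumes len: "length ts = nt" and P: "PC1 \<phi> a n m ts"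
  shows "Inv \<phi> a (Suc n) (max (lrev M \<phi> a m) (length (content (snd (step N \<phi> (CHK1, ts)) ! 1)))) (step N \<phi> (CHK1, ts))"
proof -
  from P obtain m0 b r p where pw: "PW \<phi> a m m0 b r ts" and p: "p \<le> length b" "p \<le> lrev M \<phi> a m0"
    and meq1: "Meq1 ts (snd (run M \<phi> a m)) p"
    and tw: "ts ! iW = (ruler (Suc (lrev M \<phi> a m0)), Suc p)" and bnd: "n \<le> B0 ts r (lrev M \<phi> a m0) + 2 + p"
    unfolding PC1_def by blast
  define o0 where "o0 = lrev M \<phi> a m0"
  have t1: "ts ! 1 = (encode b, p)" using PW_ans[OF pw meq1] .
  define ss where "ss = map (\<lambda>t. fst t (snd t)) ts"
  have ssx: "\<And>x. x < nt \<Longrightarrow> ss ! x = fst (ts!x) (snd (ts!x))" using len by (simp add: ss_def)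
  have kp: "\<And>x. x < nt \<Longrightarrow> act x (ts!x) (keep ss x) = ts ! x" using len by (simp add: ss_def)
  have s1: "ss ! 1 = SBlank \<longleftrightarrow> length b \<le> p" using ssx[of 1] t1 by (simp add: encode_blank_iff)
  have sW: "ss ! iW = SBlank \<longleftrightarrow> o0 \<le> p" using ssx[of iW] tw by (simp add: ruler_Blank_iff o0_def)
  have ansb: "\<And>ts'. fst (ts' ! 1) = fst (ts ! 1) \<Longrightarrow> length (content (ts' ! 1)) \<le> lrev M \<phi> a m"
    using ans_bound meq1 by (simp add: Meq1_def)
  have rok: "Rok ts (Suc o0)" using pw by (simp add: PW_def o0_def)
  show ?thesis
  proof (cases "length b \<le> p")
    case True
    then have d: "deltaN CHK1 ss = (CHKRW, mk (keep ss))" using s1 by (simp add: deltaN_def)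
    have st: "step N \<phi> (CHK1, ts) = (CHKRW, map (\<lambda>i. act i (ts!i) (keep ss i)) [0..<nt])"
      by (rule stepN) (use d len ss_def in auto)
    have "map (\<lambda>i. act i (ts!i) (keep ss i)) [0..<nt] = ts"
      using kp len by (intro nth_equalityI) auto
    then have st': "step N \<phi> (CHK1, ts) = (CHKRW, ts)" using st by simp
    have "PCRW \<phi> a (Suc n) m ts" unfolding PCRW_def
      apply (rule exI[of _ m0], rule exI[of _ b], rule exI[of _ r], rule exI[of _ "Suc p"])
      using pw p True meq1 tw bnd by simp
    then show ?thesis using st' len ansb by (auto simp: MI_def intro!: inv_intro[where m=m])
  next
    case False
    then have pl: "p < length b" by simp
    define g where "g = (if o0 \<le> p then EXTA ss else SCANA ss)"
    define q' where "q' = (if o0 \<le> p then CHK1X else CHK1)"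
    have d: "deltaN CHK1 ss = (q', mk g)" using s1 sW pl by (simp add: deltaN_def g_def q'_def)
    define ts' where "ts' = map (\<lambda>i. act i (ts!i) (g i)) [0..<nt]"
    have st: "step N \<phi> (CHK1, ts) = (q', ts')" unfolding ts'_def
      by (rule stepN) (use d len ss_def in auto)
    have l: "length ts' = nt" by (simp add: ts'_def)
    have new: "\<And>x. x < nt \<Longrightarrow> ts' ! x = act x (ts!x) (g x)" by (simp add: ts'_def)
    have K: "\<And>x. x < nt \<Longrightarrow> g x = keep ss x \<Longrightarrow> ts' ! x = ts ! x" using new kp by simp
    have gk: "\<And>x. x \<noteq> 1 \<Longrightarrow> x \<noteq> iW \<Longrightarrow> g x = keep ss x" by (simp add: g_def EXTA_def SCANA_def)
    have rdc: "\<forall>i<K. ts' ! iR i = ts ! iR i \<and> ts' ! iD i = ts ! iD i" "\<forall>j<Nc. ts' ! iC j = ts ! iC j"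
      using K gk tM_ge by auto
    have oth: "\<forall>i<tM. i \<noteq> 1 \<longrightarrow> ts' ! i = ts ! i" using K gk by auto
    have t1': "ts' ! 1 = (encode b, Suc p)" using new[of 1] t1 tM_ge by (simp add: g_def EXTA_def SCANA_def act_lo)
    have meq1': "Meq1 ts' (snd (run M \<phi> a m)) (Suc p)" using Meq1_upd[OF meq1 oth] t1' t1 by simp
    have pw': "PW \<phi> a m m0 b r ts'" using pw PW_cong[OF rdc] by simp
    have b0: "B0 ts' r o0 = B0 ts r o0" using B0_cong[OF rdc(1)] by simp
    have ans': "length (content (ts' ! 1)) \<le> lrev M \<phi> a m" using ansb[of ts'] t1 t1' by simp
    show ?thesis
    proof (cases "o0 \<le> p")
      case True
      then have po: "p = o0" using p by (simp add: o0_def)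
      have tw': "ts' ! iW = (ruler (Suc (Suc p)), Suc (Suc p))"
        using new[of iW] tw True po tM_ge by (simp add: g_def EXTA_def act_hi ruler_ext o0_def)
      have "B0 ts r o0 \<le> BX r (length b)" using B0_le_BX[OF rok] pl po by simp
      then have "PC1X \<phi> a (Suc n) m ts'" unfolding PC1X_def
        apply (rule_tac exI[of _ m0], rule_tac exI[of _ b], rule_tac exI[of _ r], rule_tac exI[of _ "Suc p"])
        using pw' pl po meq1' tw' bnd by (simp add: o0_def)
      then show ?thesis using st l ans' True by (auto simp: MI_def q'_def intro!: inv_intro[where m=m])
    next
      case False
      have tw': "ts' ! iW = (ruler (Suc o0), Suc (Suc p))"
        using new[of iW] tw False ssx[of iW] tM_ge by (simp add: g_def SCANA_def act_hi o0_def)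
      have "PC1 \<phi> a (Suc n) m ts'" unfolding PC1_def
        apply (rule_tac exI[of _ m0], rule_tac exI[of _ b], rule_tac exI[of _ r], rule_tac exI[of _ "Suc p"])
        using pw' pl False meq1' tw' bnd b0 by (simp add: o0_def)
      then show ?thesis using st l ans' False by (auto simp: MI_def q'_def intro!: inv_intro[where m=m])
    qed
  qed
qed

end


declare lrev.simps(2)[simp del]

context ext
begin

lemma step_CHK1X:
  assumes len: "length ts = nt" and P: "PC1X \<phi> a n m ts"
  shows "Inv \<phi> a (Suc n) (max (lrev M \<phi> a m) (length (content (snd (step N \<phi> (CHK1X, ts)) ! 1)))) (step N \<phi> (CHK1X, ts))"
proof -
  from P obtain m0 b r p where pw: "PW \<phi> a m m0 b r ts" and p: "lrev M \<phi> a m0 < p" "p \<le> length b"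
    and meq1: "Meq1 ts (snd (run M \<phi> a m)) p"
    and tw: "ts ! iW = (ruler (Suc p), Suc p)" and bnd: "n \<le> BX r (length b) + 2 + p"
    unfolding PC1X_def by blast
  have t1: "ts ! 1 = (encode b, p)" using PW_ans[OF pw meq1] .
  define ss where "ss = map (\<lambda>t. fst t (snd t)) ts"
  have ssx: "\<And>x. x < nt \<Longrightarrow> ss ! x = fst (ts!x) (snd (ts!x))" using len by (simp add: ss_def)
  have kp: "\<And>x. x < nt \<Longrightarrow> act x (ts!x) (keep ss x) = ts ! x" using len by (simp add: ss_def)
  have s1: "ss ! 1 = SBlank \<longleftrightarrow> length b \<le> p" using ssx[of 1] t1 by (simp add: encode_blank_iff)
  have ansb: "\<And>ts'. fst (ts' ! 1) = fst (ts ! 1) \<Longrightarrow> length (content (ts' ! 1)) \<le> lrev M \<phi> a m"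
    using ans_bound meq1 by (simp add: Meq1_def)
  show ?thesis
  proof (cases "length b \<le> p")
    case True
    then have d: "deltaN CHK1X ss = (CHKRWX, mk (keep ss))" using s1 by (simp add: deltaN_def)
    have st: "step N \<phi> (CHK1X, ts) = (CHKRWX, map (\<lambda>i. act i (ts!i) (keep ss i)) [0..<nt])"
      by (rule stepN) (use d len ss_def in auto)
    have "map (\<lambda>i. act i (ts!i) (keep ss i)) [0..<nt] = ts"
      using kp len by (intro nth_equalityI) auto
    then have st': "step N \<phi> (CHK1X, ts) = (CHKRWX, ts)" using st by simp
    have pb: "p = length b" using True p by simp
    have "PCRWX \<phi> a (Suc n) m ts" unfolding PCRWX_def
      apply (rule exI[of _ m0], rule exI[of _ b], rule exI[of _ r], rule exI[of _ "Suc p"])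
      using pw p pb meq1 tw bnd by simp
    then show ?thesis using st' len ansb by (auto simp: MI_def intro!: inv_intro[where m=m])
  next
    case False
    then have pl: "p < length b" by simp
    have d: "deltaN CHK1X ss = (CHK1X, mk (EXTA ss))" using s1 pl by (simp add: deltaN_def)
    define ts' where "ts' = map (\<lambda>i. act i (ts!i) (EXTA ss i)) [0..<nt]"
    have st: "step N \<phi> (CHK1X, ts) = (CHK1X, ts')" unfolding ts'_def
      by (rule stepN) (use d len ss_def in auto)
    have l: "length ts' = nt" by (simp add: ts'_def)
    have new: "\<And>x. x < nt \<Longrightarrow> ts' ! x = act x (ts!x) (EXTA ss x)" by (simp add: ts'_def)
    have K: "\<And>x. x < nt \<Longrightarrow> EXTA ss x = keep ss x \<Longrightarrow> ts' ! x = ts ! x" using new kp by simp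
    have gk: "\<And>x. x \<noteq> 1 \<Longrightarrow> x \<noteq> iW \<Longrightarrow> EXTA ss x = keep ss x" by (simp add: EXTA_def)
    have rdc: "\<forall>i<K. ts' ! iR i = ts ! iR i \<and> ts' ! iD i = ts ! iD i" "\<forall>j<Nc. ts' ! iC j = ts ! iC j"
      using K gk tM_ge by auto
    have oth: "\<forall>i<tM. i \<noteq> 1 \<longrightarrow> ts' ! i = ts ! i" using K gk by auto
    have t1': "ts' ! 1 = (encode b, Suc p)" using new[of 1] t1 tM_ge by (simp add: EXTA_def act_lo)
    have meq1': "Meq1 ts' (snd (run M \<phi> a m)) (Suc p)" using Meq1_upd[OF meq1 oth] t1' t1 by simp
    have pw': "PW \<phi> a m m0 b r ts'" using pw PW_cong[OF rdc] by simp
    have ans': "length (content (ts' ! 1)) \<le> lrev M \<phi> a m" using ansb[of ts'] t1 t1' by simp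
    have tw': "ts' ! iW = (ruler (Suc (Suc p)), Suc (Suc p))"
      using new[of iW] tw tM_ge by (simp add: EXTA_def act_hi ruler_ext)
    have "PC1X \<phi> a (Suc n) m ts'" unfolding PC1X_def
      apply (rule exI[of _ m0], rule exI[of _ b], rule exI[of _ r], rule exI[of _ "Suc p"])
      using pw' pl p meq1' tw' bnd by simp
    then show ?thesis using st l ans' by (auto simp: MI_def intro!: inv_intro[where m=m])
  qed
qed

lemma PW_facts: "PW \<phi> a m m0 b r ts \<Longrightarrow> m = Suc m0 \<and> fst (run M \<phi> a m0) = qquery M \<and> qquery M \<noteq> qhalt M
     \<and> fst (run M \<phi> a m) = qans M \<and> snd (run M \<phi> a m) ! 1 = (encode b, 0)
     \<and> lrev M \<phi> a m = max (lrev M \<phi> a m0) (length b) \<and> Rok ts (Suc (lrev M \<phi> a m0))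
     \<and> mu ts (Suc (lrev M \<phi> a m0)) < m \<and> Cok ts r \<and> card (lrev M \<phi> a ` {..m0}) = Suc r"
  unfolding PW_def by blast

lemma Meq1_0: "Meq1 ts us 0 \<Longrightarrow> snd (us ! 1) = 0 \<Longrightarrow> Meq ts us"
  unfolding Meq1_def Meq_def by (metis prod.collapse)

lemma step_CHKRW:
  assumes len: "length ts = nt" and P: "PCRW \<phi> a n m ts"
  shows "Inv \<phi> a (Suc n) (max (lrev M \<phi> a m) (length (content (snd (step N \<phi> (CHKRW, ts)) ! 1)))) (step N \<phi> (CHKRW, ts))"
proof -
  from P obtain m0 b r h where pw: "PW \<phi> a m m0 b r ts" and bo: "length b \<le> lrev M \<phi> a m0"
    and h: "h \<le> Suc (length b)" and meq1: "Meq1 ts (snd (run M \<phi> a m)) (h - 1)"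
    and tw: "ts ! iW = (ruler (Suc (lrev M \<phi> a m0)), h)" and bnd: "n + h \<le> B0 ts r (lrev M \<phi> a m0) + 4 + 2 * length b"
    unfolding PCRW_def by blast
  define o0 where "o0 = lrev M \<phi> a m0"
  from pw have mS: "m = Suc m0" and fq: "fst (run M \<phi> a m0) = qquery M" and qqh: "qquery M \<noteq> qhalt M"
    and fa: "fst (run M \<phi> a m) = qans M" and sa: "snd (run M \<phi> a m) ! 1 = (encode b, 0)"
    and lrm0: "lrev M \<phi> a m = max (lrev M \<phi> a m0) (length b)" and mul: "mu ts (Suc (lrev M \<phi> a m0)) < m"
    and cok: "Cok ts r" and card0: "card (lrev M \<phi> a ` {..m0}) = Suc r" unfolding PW_def by auto
  have t1: "ts ! 1 = (encode b, h - 1)" using PW_ans[OF pw meq1] .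
  define ss where "ss = map (\<lambda>t. fst t (snd t)) ts"
  have ssx: "\<And>x. x < nt \<Longrightarrow> ss ! x = fst (ts!x) (snd (ts!x))" using len by (simp add: ss_def)
  have kp: "\<And>x. x < nt \<Longrightarrow> act x (ts!x) (keep ss x) = ts ! x" using len by (simp add: ss_def)
  have sW: "ss ! iW = S0 \<longleftrightarrow> h = 0" using ssx[of iW] tw by (simp add: ruler_S0_iff)
  have ansb: "\<And>ts'. fst (ts' ! 1) = fst (ts ! 1) \<Longrightarrow> length (content (ts' ! 1)) \<le> lrev M \<phi> a m"
    using ans_bound meq1 by (simp add: Meq1_def)
  have rok: "Rok ts (Suc o0)" using pw by (simp add: o0_def PW_def)
  have lrm: "lrev M \<phi> a m = o0" using lrm0 bo by (auto simp: o0_def)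
  show ?thesis
  proof (cases "h = 0")
    case False
    have d: "deltaN CHKRW ss = (CHKRW, mk (RWA ss))" using sW False by (simp add: deltaN_def)
    define ts' where "ts' = map (\<lambda>i. act i (ts!i) (RWA ss i)) [0..<nt]"
    have st: "step N \<phi> (CHKRW, ts) = (CHKRW, ts')" unfolding ts'_def
      by (rule stepN) (use d len ss_def in auto)
    have l: "length ts' = nt" by (simp add: ts'_def)
    have new: "\<And>x. x < nt \<Longrightarrow> ts' ! x = act x (ts!x) (RWA ss x)" by (simp add: ts'_def)
    have K: "\<And>x. x < nt \<Longrightarrow> RWA ss x = keep ss x \<Longrightarrow> ts' ! x = ts ! x" using new kp by simp
    have gk: "\<And>x. x \<noteq> 1 \<Longrightarrow> x \<noteq> iW \<Longrightarrow> RWA ss x = keep ss x" by (simp add: RWA_def)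
    have rdc: "\<forall>i<K. ts' ! iR i = ts ! iR i \<and> ts' ! iD i = ts ! iD i" "\<forall>j<Nc. ts' ! iC j = ts ! iC j"
      using K gk tM_ge by auto
    have oth: "\<forall>i<tM. i \<noteq> 1 \<longrightarrow> ts' ! i = ts ! i" using K gk by auto
    have t1': "ts' ! 1 = (encode b, h - 1 - 1)" using new[of 1] t1 tM_ge by (simp add: RWA_def act_lo)
    have meq1': "Meq1 ts' (snd (run M \<phi> a m)) (h - 1 - 1)" using Meq1_upd[OF meq1 oth] t1' t1 by simp
    have pw': "PW \<phi> a m m0 b r ts'" using pw PW_cong[OF rdc] by simp
    have b0: "B0 ts' r o0 = B0 ts r o0" using B0_cong[OF rdc(1)] by simp
    have ans': "length (content (ts' ! 1)) \<le> lrev M \<phi> a m" using ansb[of ts'] t1 t1' by simp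
    have tw': "ts' ! iW = (ruler (Suc o0), h - 1)"
      using new[of iW] tw tM_ge ssx[of iW] by (simp add: RWA_def act_hi o0_def)
    have "PCRW \<phi> a (Suc n) m ts'" unfolding PCRW_def
      apply (rule exI[of _ m0], rule exI[of _ b], rule exI[of _ r], rule exI[of _ "h - 1"])
      using pw' bo h meq1' tw' bnd b0 False by (simp add: o0_def)
    then show ?thesis using st l ans' by (auto simp: MI_def intro!: inv_intro[where m=m])
  next
    case True
    have meq: "Meq ts (snd (run M \<phi> a m))" using Meq1_0[of ts "snd (run M \<phi> a m)"] meq1 True sa by simp
    have card: "card (lrev M \<phi> a ` {..m}) = Suc r"
      using card0 card_same[of \<phi> a m0] lrm mS by (simp add: o0_def)
    have ans0: "length (content (ts ! 1)) \<le> lrev M \<phi> a m" using ansb by simp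
    show ?thesis
    proof (cases "expired ss")
      case True
      then have d: "deltaN CHKRW ss = (HALTs, mk (keep ss))" using sW \<open>h = 0\<close> by (simp add: deltaN_def)
      have st: "step N \<phi> (CHKRW, ts) = (HALTs, map (\<lambda>i. act i (ts!i) (keep ss i)) [0..<nt])"
        by (rule stepN) (use d len ss_def in auto)
      have "map (\<lambda>i. act i (ts!i) (keep ss i)) [0..<nt] = ts"
        using kp len by (intro nth_equalityI) auto
      then have st': "step N \<phi> (CHKRW, ts) = (HALTs, ts)" using st by simp
      have notA: "\<phi> \<notin> A"
      proof
        assume A: "\<phi> \<in> A"
        have "\<not> halted_at M \<phi> a m0" using fq qqh by (simp add: halted_at_def)
        then have "Suc m0 \<le> t (lrev M \<phi> a (Suc m0))" by (rule sc_use[OF A])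
        then have "Suc m0 \<le> t o0" using lrm mS by simp
        also have "\<dots> \<le> Gam (Suc o0)" using t_Gam by simp
        also have "\<dots> = mu ts (Suc o0)" using expired_mu[OF len rok] True by (simp add: ss_def)
        finally show False using mul mS by (simp add: o0_def)
      qed
      have "PH \<phi> a m ts" using meq notA card cok by (simp add: PH_def Cok_def)
      then show ?thesis using st' len ans0 by (auto simp: MI_def intro!: inv_intro[where m=m])
    next
      case False
      then have d: "deltaN CHKRW ss = (enc (qans M), mk (tickA ss))" using sW \<open>h = 0\<close> by (simp add: deltaN_def)
      define ts' where "ts' = map (\<lambda>i. act i (ts!i) (tickA ss i)) [0..<nt]"
      have st: "step N \<phi> (CHKRW, ts) = (enc (qans M), ts')" unfolding ts'_def
        by (rule stepN) (use d len ss_def in auto)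
      have l: "length ts' = nt" by (simp add: ts'_def)
      have new: "\<And>x. x < nt \<Longrightarrow> ts' ! x = act x (ts!x) (tickA ss x)" by (simp add: ts'_def)
      have K: "\<And>x. x < nt \<Longrightarrow> tickA ss x = keep ss x \<Longrightarrow> ts' ! x = ts ! x" using new kp by simp
      have tick: "Rok ts' (Suc o0) \<and> mu ts' (Suc o0) = Suc (mu ts (Suc o0))"
        by (rule tick_lemma[OF len rok False[unfolded ss_def], of "tickA ss"])
           (auto simp: ss_def ts'_def)
      have meq': "Meq ts' (snd (run M \<phi> a m))" using meq K unfolding Meq_def by (auto simp: tickA_def)
      have tw': "ts' ! iW = (ruler (Suc o0), 0)" using K[of iW] tw True by (simp add: tickA_def o0_def)
      have cok': "Cok ts' r" using cok K by (subst Cok_cong) (auto simp: tickA_def)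
      have ans': "length (content (ts' ! 1)) \<le> lrev M \<phi> a m" using meq' ans_bound[of ts' \<phi> a m] tM_ge
        by (simp add: Meq_def)
      have bnd': "Suc n \<le> r * Y (Suc o0) + X (Suc o0) + mu ts' (Suc o0) * T (Suc o0)"
        using bnd tick bo True by (simp add: B0_def T_def o0_def)
      show ?thesis
      proof (cases "qans M = qhalt M")
        case True
        then have e: "enc (qans M) = HALTs" by (simp add: enc_def)
        have "PH \<phi> a m ts'" using meq' fa True card cok by (simp add: PH_def Cok_def)
        then show ?thesis using st e l ans' by (auto simp: MI_def intro!: inv_intro[where m=m])
      next
        case False
        have q': "enc (qans M) < nstates M \<or> enc (qans M) = QRY" using wfM False by (simp add: enc_def wf_otm_def)
        have "PAL \<phi> a (Suc n) m (enc (qans M)) ts'"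
          unfolding PAL_def using fa False meq' tw' tick cok' card bnd' lrm mul
          by (auto simp: o0_def)
        then show ?thesis using st l ans' q' by (auto simp: MI_def intro!: inv_intro[where m=m])
      qed
    qed
  qed
qed

end


context ext
begin

lemma card_new: "lrev M \<phi> a m0 < lrev M \<phi> a (Suc m0) \<Longrightarrow>
   card (lrev M \<phi> a ` {..Suc m0}) = Suc (card (lrev M \<phi> a ` {..m0}))"
proof -
  assume lt: "lrev M \<phi> a m0 < lrev M \<phi> a (Suc m0)"
  have "lrev M \<phi> a (Suc m0) \<notin> lrev M \<phi> a ` {..m0}"
    using lrev_mono[of _ m0 M \<phi> a] lt by (auto simp: not_le[symmetric])
  then show ?thesis by (simp add: atMost_Suc)
qed

lemma step_CHKRWX:
  assumes len: "length ts = nt" and P: "PCRWX \<phi> a n m ts"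
  shows "Inv \<phi> a (Suc n) (max (lrev M \<phi> a m) (length (content (snd (step N \<phi> (CHKRWX, ts)) ! 1)))) (step N \<phi> (CHKRWX, ts))"
proof -
  from P obtain m0 b r h where pw: "PW \<phi> a m m0 b r ts" and bo: "lrev M \<phi> a m0 < length b"
    and h: "h \<le> Suc (length b)" and meq1: "Meq1 ts (snd (run M \<phi> a m)) (h - 1)"
    and tw: "ts ! iW = (ruler (Suc (length b)), h)" and bnd: "n + h \<le> BX r (length b) + 4 + 2 * length b"
    unfolding PCRWX_def by blast
  define o0 where "o0 = lrev M \<phi> a m0"
  from pw have mS: "m = Suc m0" and fq: "fst (run M \<phi> a m0) = qquery M" and qqh: "qquery M \<noteq> qhalt M"
    and fa: "fst (run M \<phi> a m) = qans M" and sa: "snd (run M \<phi> a m) ! 1 = (encode b, 0)"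
    and lrm0: "lrev M \<phi> a m = max (lrev M \<phi> a m0) (length b)" and mul: "mu ts (Suc (lrev M \<phi> a m0)) < m"
    and cok: "Cok ts r" and card0: "card (lrev M \<phi> a ` {..m0}) = Suc r"
    and rok: "Rok ts (Suc o0)" unfolding PW_def o0_def by auto
  have t1: "ts ! 1 = (encode b, h - 1)" using PW_ans[OF pw meq1] .
  define ss where "ss = map (\<lambda>t. fst t (snd t)) ts"
  have ssx: "\<And>x. x < nt \<Longrightarrow> ss ! x = fst (ts!x) (snd (ts!x))" using len by (simp add: ss_def)
  have kp: "\<And>x. x < nt \<Longrightarrow> act x (ts!x) (keep ss x) = ts ! x" using len by (simp add: ss_def)
  have sW: "ss ! iW = S0 \<longleftrightarrow> h = 0" using ssx[of iW] tw by (simp add: ruler_S0_iff)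
  have ansb: "\<And>ts'. fst (ts' ! 1) = fst (ts ! 1) \<Longrightarrow> length (content (ts' ! 1)) \<le> lrev M \<phi> a m"
    using ans_bound meq1 by (simp add: Meq1_def)
  have lrm: "lrev M \<phi> a m = length b" using lrm0 bo by auto
  show ?thesis
  proof (cases "h = 0")
    case False
    have d: "deltaN CHKRWX ss = (CHKRWX, mk (RWA ss))" using sW False by (simp add: deltaN_def)
    define ts' where "ts' = map (\<lambda>i. act i (ts!i) (RWA ss i)) [0..<nt]"
    have st: "step N \<phi> (CHKRWX, ts) = (CHKRWX, ts')" unfolding ts'_def
      by (rule stepN) (use d len ss_def in auto)
    have l: "length ts' = nt" by (simp add: ts'_def)
    have new: "\<And>x. x < nt \<Longrightarrow> ts' ! x = act x (ts!x) (RWA ss x)" by (simp add: ts'_def)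
    have K: "\<And>x. x < nt \<Longrightarrow> RWA ss x = keep ss x \<Longrightarrow> ts' ! x = ts ! x" using new kp by simp
    have gk: "\<And>x. x \<noteq> 1 \<Longrightarrow> x \<noteq> iW \<Longrightarrow> RWA ss x = keep ss x" by (simp add: RWA_def)
    have rdc: "\<forall>i<K. ts' ! iR i = ts ! iR i \<and> ts' ! iD i = ts ! iD i" "\<forall>j<Nc. ts' ! iC j = ts ! iC j"
      using K gk tM_ge by auto
    have oth: "\<forall>i<tM. i \<noteq> 1 \<longrightarrow> ts' ! i = ts ! i" using K gk by auto
    have t1': "ts' ! 1 = (encode b, h - 1 - 1)" using new[of 1] t1 tM_ge by (simp add: RWA_def act_lo)
    have meq1': "Meq1 ts' (snd (run M \<phi> a m)) (h - 1 - 1)" using Meq1_upd[OF meq1 oth] t1' t1 by simp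
    have pw': "PW \<phi> a m m0 b r ts'" using pw PW_cong[OF rdc] by simp
    have ans': "length (content (ts' ! 1)) \<le> lrev M \<phi> a m" using ansb[of ts'] t1 t1' by simp
    have tw': "ts' ! iW = (ruler (Suc (length b)), h - 1)"
      using new[of iW] tw tM_ge ssx[of iW] by (simp add: RWA_def act_hi)
    have "PCRWX \<phi> a (Suc n) m ts'" unfolding PCRWX_def
      apply (rule exI[of _ m0], rule exI[of _ b], rule exI[of _ r], rule exI[of _ "h - 1"])
      using pw' bo h meq1' tw' bnd False by simp
    then show ?thesis using st l ans' by (auto simp: MI_def intro!: inv_intro[where m=m])
  next
    case True
    have meq: "Meq ts (snd (run M \<phi> a m))" using Meq1_0[of ts "snd (run M \<phi> a m)"] meq1 True sa by simp
    have card: "card (lrev M \<phi> a ` {..m}) = Suc (Suc r)"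
      using card0 card_new[of \<phi> a m0] lrm bo mS by simp
    have ans0: "length (content (ts ! 1)) \<le> lrev M \<phi> a m" using ansb by simp
    have sC: "\<And>j. j < Nc \<Longrightarrow> ss ! iC j = S1 \<longleftrightarrow> j < r"
      using ssx cok by (simp add: Cok_def)
    have rN: "r \<le> Nc" using cok by (simp add: Cok_def)
    show ?thesis
    proof (cases "r = Nc")
      case True
      then have "\<forall>j<Nc. ss ! iC j = S1" using sC by simp
      then have d: "deltaN CHKRWX ss = (HALTs, mk (keep ss))" using sW \<open>h = 0\<close> by (simp add: deltaN_def)
      have st: "step N \<phi> (CHKRWX, ts) = (HALTs, map (\<lambda>i. act i (ts!i) (keep ss i)) [0..<nt])"
        by (rule stepN) (use d len ss_def in auto)
      have "map (\<lambda>i. act i (ts!i) (keep ss i)) [0..<nt] = ts"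
        using kp len by (intro nth_equalityI) auto
      then have st': "step N \<phi> (CHKRWX, ts) = (HALTs, ts)" using st by simp
      have notA: "\<phi> \<notin> A"
      proof
        assume A: "\<phi> \<in> A"
        then have f: "finite (range (lrev M \<phi> a))" and c: "card (range (lrev M \<phi> a)) \<le> Nc" using flrM by auto
        have "card (lrev M \<phi> a ` {..m}) \<le> card (range (lrev M \<phi> a))"
          by (rule card_mono[OF f]) auto
        then show False using c card True by simp
      qed
      have "PH \<phi> a m ts" using meq notA card True by (simp add: PH_def)
      then show ?thesis using st' len ans0 by (auto simp: MI_def intro!: inv_intro[where m=m])
    next
      case False
      then have rl: "r < Nc" using rN by simp
      have ex: "\<not> (\<forall>j<Nc. ss ! iC j = S1)" using sC rl by auto
      have rr: "rr ss = r" unfolding rr_def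
        by (rule Least_equality) (use sC rl in \<open>auto simp: not_less[symmetric]\<close>)
      have d: "deltaN CHKRWX ss = (SYNC1, mk (XA ss))" using sW \<open>h = 0\<close> ex by (simp add: deltaN_def)
      define ts' where "ts' = map (\<lambda>i. act i (ts!i) (XA ss i)) [0..<nt]"
      have st: "step N \<phi> (CHKRWX, ts) = (SYNC1, ts')" unfolding ts'_def
        by (rule stepN) (use d len ss_def in auto)
      have l: "length ts' = nt" by (simp add: ts'_def)
      have new: "\<And>x. x < nt \<Longrightarrow> ts' ! x = act x (ts!x) (XA ss x)" by (simp add: ts'_def)
      have K: "\<And>x. x < nt \<Longrightarrow> XA ss x = keep ss x \<Longrightarrow> ts' ! x = ts ! x" using new kp by simp
      have meq': "Meq ts' (snd (run M \<phi> a m))" using meq K unfolding Meq_def by (auto simp: XA_def)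
      have tw': "ts' ! iW = (ruler (Suc (length b)), 0)" using K[of iW] tw True by (simp add: XA_def)
      have tR: "\<forall>i<K. ts' ! iR i = ts ! iR i" using K by (auto simp: XA_def)
      have tD: "\<forall>i<K. snd (ts' ! iD i) = 0 \<and> fst (ts' ! iD i) 0 = S0"
      proof (intro allI impI)
        fix i assume i: "i < K"
        have "ts' ! iD i = act (iD i) (ts ! iD i) (S0, Stay)" using new[of "iD i"] i by (simp add: XA_def)
        then show "snd (ts' ! iD i) = 0 \<and> fst (ts' ! iD i) 0 = S0" using rok i tM_ge
          by (simp add: act_hi Rok_def)
      qed
      have cc: "\<forall>j<Nc. snd (ts' ! iC j) = 0 \<and> (fst (ts' ! iC j) 0 = S1) = (j < Suc r)"
      proof (intro allI impI)
        fix j assume j: "j < Nc"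
        show "snd (ts' ! iC j) = 0 \<and> (fst (ts' ! iC j) 0 = S1) = (j < Suc r)"
        proof (cases "j = r")
          case True
          have "ts' ! iC j = act (iC j) (ts ! iC j) (S1, Stay)" using new[of "iC j"] j True rr by (simp add: XA_def)
          then show ?thesis using cok j True tM_ge by (simp add: act_hi Cok_def)
        next
          case False
          have "ts' ! iC j = ts ! iC j" using K[of "iC j"] j False rr by (simp add: XA_def)
          then show ?thesis using cok j False by (auto simp: Cok_def)
        qed
      qed
      have cok': "Cok ts' (Suc r)" unfolding Cok_def using cc rl by simp
      have ans': "length (content (ts' ! 1)) \<le> lrev M \<phi> a m" using meq' ans_bound[of ts' \<phi> a m] tM_ge
        by (simp add: Meq_def)
      have sump: "(\<Sum>i<K. snd (ts' ! iR i)) \<le> K * Suc (length b)"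
      proof -
        have "(\<Sum>i<K. snd (ts' ! iR i)) \<le> (\<Sum>i<K. Suc (length b))"
        proof (rule sum_mono)
          fix i assume "i \<in> {..<K}"
          then show "snd (ts' ! iR i) \<le> Suc (length b)" using tR rok bo by (auto simp: Rok_def o0_def)
        qed
        then show ?thesis by simp
      qed
      have bs: "BS (Suc r) (Suc (length b)) = BX r (length b)" by (simp add: BS_def BX_def)
      have "PS1 \<phi> a (Suc n) m ts'" unfolding PS1_def PS_def
        apply (rule exI[of _ "Suc r"], rule exI[of _ "Suc o0"], rule exI[of _ "Suc (length b)"])
        using lrm fa meq' tD cok' card tw' tR rok bo bnd sump bs True by (auto simp: Rok_def o0_def)
      then show ?thesis using st l ans' by (auto simp: MI_def intro!: inv_intro[where m=m])
    qed
  qed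
qed

end


context ext
begin

lemma PS_cong: "(\<forall>i<tM. ts' ! i = ts ! i) \<Longrightarrow> (\<forall>i<K. ts' ! iD i = ts ! iD i) \<Longrightarrow> (\<forall>j<Nc. ts' ! iC j = ts ! iC j) \<Longrightarrow>
   PS \<phi> a m r ts' \<longleftrightarrow> PS \<phi> a m r ts"
  unfolding PS_def Meq_def using Cok_cong[of ts' ts] by simp

lemma mixr_0: "mixr L Lo 0 = ruler Lo" by (simp add: mixr_def fun_eq_iff)
lemma mixr_full: "Lo \<le> L \<Longrightarrow> mixr L Lo L = ruler L" by (auto simp: mixr_def fun_eq_iff ruler_def)
lemma mixr_step: "(mixr L Lo h)(h := ruler L h) = mixr L Lo (Suc h)" by (auto simp: mixr_def fun_eq_iff)

lemma step_SYNC1: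
  assumes len: "length ts = nt" and P: "PS1 \<phi> a n m ts"
  shows "Inv \<phi> a (Suc n) (max (lrev M \<phi> a m) (length (content (snd (step N \<phi> (SYNC1, ts)) ! 1)))) (step N \<phi> (SYNC1, ts))"
proof -
  from P obtain r Lo L where L: "L = Suc (lrev M \<phi> a m)" and ps: "PS \<phi> a m r ts" and tw: "ts ! iW = (ruler L, 0)"
    and Lo: "1 \<le> Lo" "Lo \<le> L" and tR: "\<forall>i<K. fst (ts ! iR i) = ruler Lo \<and> snd (ts ! iR i) \<le> Lo"
    and bnd: "n + (\<Sum>i<K. snd (ts ! iR i)) \<le> BS r L + 2 * L + 3 + K * L"
    unfolding PS1_def by blast
  have meq: "Meq ts (snd (run M \<phi> a m))" using ps by (simp add: PS_def)
  have ans0: "\<And>ts'. fst (ts' ! 1) = fst (ts ! 1) \<Longrightarrow> length (content (ts' ! 1)) \<le> lrev M \<phi> a m"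
    using ans_bound meq tM_ge by (simp add: Meq_def)
  define ss where "ss = map (\<lambda>t. fst t (snd t)) ts"
  have ssx: "\<And>x. x < nt \<Longrightarrow> ss ! x = fst (ts!x) (snd (ts!x))" using len by (simp add: ss_def)
  have kp: "\<And>x. x < nt \<Longrightarrow> act x (ts!x) (keep ss x) = ts ! x" using len by (simp add: ss_def)
  have sR: "\<And>i. i < K \<Longrightarrow> ss ! iR i = S0 \<longleftrightarrow> snd (ts ! iR i) = 0" using ssx tR Lo by (simp add: ruler_S0_iff)
  show ?thesis
  proof (cases "\<forall>i<K. ss ! iR i = S0")
    case True
    then have z: "\<forall>i<K. snd (ts ! iR i) = 0" using sR by simp
    have d: "deltaN SYNC1 ss = (SYNC2, mk (keep ss))" using True by (simp add: deltaN_def)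
    have st: "step N \<phi> (SYNC1, ts) = (SYNC2, map (\<lambda>i. act i (ts!i) (keep ss i)) [0..<nt])"
      by (rule stepN) (use d len ss_def in auto)
    have "map (\<lambda>i. act i (ts!i) (keep ss i)) [0..<nt] = ts"
      using kp len by (intro nth_equalityI) auto
    then have st': "step N \<phi> (SYNC1, ts) = (SYNC2, ts)" using st by simp
    have rr: "\<forall>i<K. ts ! iR i = (mixr L Lo 0, 0)" using tR z by (metis mixr_0 prod.collapse)
    have "PS2 \<phi> a (Suc n) m ts" unfolding PS2_def
      apply (rule exI[of _ r], rule exI[of _ Lo], rule exI[of _ L], rule exI[of _ "0::nat"])
      using L ps tw Lo rr bnd z by simp
    then show ?thesis using st' len ans0 by (auto simp: MI_def intro!: inv_intro[where m=m])
  next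
    case False
    have d: "deltaN SYNC1 ss = (SYNC1, mk (SYNC1A ss))" using False by (simp add: deltaN_def)
    define ts' where "ts' = map (\<lambda>i. act i (ts!i) (SYNC1A ss i)) [0..<nt]"
    have st: "step N \<phi> (SYNC1, ts) = (SYNC1, ts')" unfolding ts'_def
      by (rule stepN) (use d len ss_def in auto)
    have l: "length ts' = nt" by (simp add: ts'_def)
    have new: "\<And>x. x < nt \<Longrightarrow> ts' ! x = act x (ts!x) (SYNC1A ss x)" by (simp add: ts'_def)
    have K: "\<And>x. x < nt \<Longrightarrow> SYNC1A ss x = keep ss x \<Longrightarrow> ts' ! x = ts ! x" using new kp by simp
    have oth: "\<forall>i<tM. ts' ! i = ts ! i" "\<forall>i<K. ts' ! iD i = ts ! iD i" "\<forall>j<Nc. ts' ! iC j = ts ! iC j"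
      using K by (auto simp: SYNC1A_def)
    have tw': "ts' ! iW = (ruler L, 0)" using K[of iW] tw by (simp add: SYNC1A_def)
    have tR': "\<And>i. i < K \<Longrightarrow> ts' ! iR i = (ruler Lo, snd (ts ! iR i) - 1)"
    proof -
      fix i assume i: "i < K"
      have "ts' ! iR i = act (iR i) (ts ! iR i) (SYNC1A ss (iR i))" using new[of "iR i"] i by simp
      then show "ts' ! iR i = (ruler Lo, snd (ts ! iR i) - 1)" using i tR[rule_format, OF i] sR[of i] ssx[of "iR i"] tM_ge
        by (cases "ts ! iR i") (auto simp: SYNC1A_def keep_def act_hi)
    qed
    have lt: "(\<Sum>i<K. snd (ts' ! iR i)) < (\<Sum>i<K. snd (ts ! iR i))"
    proof (rule sum_strict_mono_ex1)
      show "\<forall>x\<in>{..<K}. snd (ts' ! iR x) \<le> snd (ts ! iR x)" using tR' by simp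
      obtain i where "i < K" "ss ! iR i \<noteq> S0" using False by auto
      then show "\<exists>a\<in>{..<K}. snd (ts' ! iR a) < snd (ts ! iR a)" using tR' sR by (intro bexI[of _ i]) auto
    qed simp
    have ps': "PS \<phi> a m r ts'" using ps PS_cong[OF oth] by simp
    have "PS1 \<phi> a (Suc n) m ts'" unfolding PS1_def
      apply (rule exI[of _ r], rule exI[of _ Lo], rule exI[of _ L])
      using L ps' tw' Lo tR tR' bnd lt by auto
    then show ?thesis using st l ans0[of ts'] oth(1) tM_ge by (auto simp: MI_def intro!: inv_intro[where m=m])
  qed
qed

lemma step_SYNC2:
  assumes len: "length ts = nt" and P: "PS2 \<phi> a n m ts"
  shows "Inv \<phi> a (Suc n) (max (lrev M \<phi> a m) (length (content (snd (step N \<phi> (SYNC2, ts)) ! 1)))) (step N \<phi> (SYNC2, ts))"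
proof -
  from P obtain r Lo L h where L: "L = Suc (lrev M \<phi> a m)" and ps: "PS \<phi> a m r ts" and h: "h \<le> L"
    and tw: "ts ! iW = (ruler L, h)" and Lo: "1 \<le> Lo" "Lo \<le> L" and tR: "\<forall>i<K. ts ! iR i = (mixr L Lo h, h)"
    and bnd: "n \<le> BS r L + 2 * L + 4 + K * L + h"
    unfolding PS2_def by blast
  have meq: "Meq ts (snd (run M \<phi> a m))" using ps by (simp add: PS_def)
  have ans0: "\<And>ts'. fst (ts' ! 1) = fst (ts ! 1) \<Longrightarrow> length (content (ts' ! 1)) \<le> lrev M \<phi> a m"
    using ans_bound meq tM_ge by (simp add: Meq_def)
  define ss where "ss = map (\<lambda>t. fst t (snd t)) ts"
  have ssx: "\<And>x. x < nt \<Longrightarrow> ss ! x = fst (ts!x) (snd (ts!x))" using len by (simp add: ss_def)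
  have kp: "\<And>x. x < nt \<Longrightarrow> act x (ts!x) (keep ss x) = ts ! x" using len by (simp add: ss_def)
  have sW: "ss ! iW = SBlank \<longleftrightarrow> h = L" using ssx[of iW] tw h L by (auto simp: ruler_Blank_iff)
  show ?thesis
  proof (cases "h = L")
    case True
    have d: "deltaN SYNC2 ss = (SYNC3, mk (keep ss))" using True sW by (simp add: deltaN_def)
    have st: "step N \<phi> (SYNC2, ts) = (SYNC3, map (\<lambda>i. act i (ts!i) (keep ss i)) [0..<nt])"
      by (rule stepN) (use d len ss_def in auto)
    have "map (\<lambda>i. act i (ts!i) (keep ss i)) [0..<nt] = ts"
      using kp len by (intro nth_equalityI) auto
    then have st': "step N \<phi> (SYNC2, ts) = (SYNC3, ts)" using st by simp
    have rr: "\<forall>i<K. ts ! iR i = (ruler L, L)" using tR True mixr_full[OF Lo(2)] by simp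
    have "PS3 \<phi> a (Suc n) m ts" unfolding PS3_def
      apply (rule exI[of _ r], rule exI[of _ L], rule exI[of _ L])
      using L ps tw rr bnd True by simp
    then show ?thesis using st' len ans0 by (auto simp: MI_def intro!: inv_intro[where m=m])
  next
    case False
    have d: "deltaN SYNC2 ss = (SYNC2, mk (SYNC2A ss))" using False sW by (simp add: deltaN_def)
    define ts' where "ts' = map (\<lambda>i. act i (ts!i) (SYNC2A ss i)) [0..<nt]"
    have st: "step N \<phi> (SYNC2, ts) = (SYNC2, ts')" unfolding ts'_def
      by (rule stepN) (use d len ss_def in auto)
    have l: "length ts' = nt" by (simp add: ts'_def)
    have new: "\<And>x. x < nt \<Longrightarrow> ts' ! x = act x (ts!x) (SYNC2A ss x)" by (simp add: ts'_def)
    have K: "\<And>x. x < nt \<Longrightarrow> SYNC2A ss x = keep ss x \<Longrightarrow> ts' ! x = ts ! x" using new kp by simp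
    have oth: "\<forall>i<tM. ts' ! i = ts ! i" "\<forall>i<K. ts' ! iD i = ts ! iD i" "\<forall>j<Nc. ts' ! iC j = ts ! iC j"
      using K by (auto simp: SYNC2A_def)
    have tw': "ts' ! iW = (ruler L, Suc h)" using new[of iW] tw ssx[of iW] tM_ge by (simp add: SYNC2A_def act_hi)
    have tR': "\<forall>i<K. ts' ! iR i = (mixr L Lo (Suc h), Suc h)"
    proof (intro allI impI)
      fix i assume i: "i < K"
      have "ts' ! iR i = act (iR i) (ts ! iR i) (ss ! iW, MvR)" using new[of "iR i"] i by (simp add: SYNC2A_def)
      then show "ts' ! iR i = (mixr L Lo (Suc h), Suc h)" using i tR ssx[of iW] tw tM_ge
        by (simp add: act_hi mixr_step)
    qed
    have ps': "PS \<phi> a m r ts'" using ps PS_cong[OF oth] by simp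
    have "PS2 \<phi> a (Suc n) m ts'" unfolding PS2_def
      apply (rule exI[of _ r], rule exI[of _ Lo], rule exI[of _ L], rule exI[of _ "Suc h"])
      using L ps' tw' Lo tR' bnd h False by auto
    then show ?thesis using st l ans0[of ts'] oth(1) tM_ge by (auto simp: MI_def intro!: inv_intro[where m=m])
  qed
qed

lemma step_SYNC3:
  assumes len: "length ts = nt" and P: "PS3 \<phi> a n m ts"
  shows "Inv \<phi> a (Suc n) (max (lrev M \<phi> a m) (length (content (snd (step N \<phi> (SYNC3, ts)) ! 1)))) (step N \<phi> (SYNC3, ts))"
proof -
  from P obtain r L h where L: "L = Suc (lrev M \<phi> a m)" and ps: "PS \<phi> a m r ts" and h: "h \<le> L"
    and tw: "ts ! iW = (ruler L, h)" and tR: "\<forall>i<K. ts ! iR i = (ruler L, h)"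
    and bnd: "n + h \<le> BS r L + 4 * L + 5 + K * L"
    unfolding PS3_def by blast
  have meq: "Meq ts (snd (run M \<phi> a m))" using ps by (simp add: PS_def)
  have ans0: "\<And>ts'. fst (ts' ! 1) = fst (ts ! 1) \<Longrightarrow> length (content (ts' ! 1)) \<le> lrev M \<phi> a m"
    using ans_bound meq tM_ge by (simp add: Meq_def)
  define ss where "ss = map (\<lambda>t. fst t (snd t)) ts"
  have ssx: "\<And>x. x < nt \<Longrightarrow> ss ! x = fst (ts!x) (snd (ts!x))" using len by (simp add: ss_def)
  have kp: "\<And>x. x < nt \<Longrightarrow> act x (ts!x) (keep ss x) = ts ! x" using len by (simp add: ss_def)
  have sW: "ss ! iW = S0 \<longleftrightarrow> h = 0" using ssx[of iW] tw L by (simp add: ruler_S0_iff)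
  show ?thesis
  proof (cases "h = 0")
    case True
    have d: "deltaN SYNC3 ss = (enc (qans M), mk (keep ss))" using True sW by (simp add: deltaN_def)
    have st: "step N \<phi> (SYNC3, ts) = (enc (qans M), map (\<lambda>i. act i (ts!i) (keep ss i)) [0..<nt])"
      by (rule stepN) (use d len ss_def in auto)
    have "map (\<lambda>i. act i (ts!i) (keep ss i)) [0..<nt] = ts"
      using kp len by (intro nth_equalityI) auto
    then have st': "step N \<phi> (SYNC3, ts) = (enc (qans M), ts)" using st by simp
    from ps have fa: "fst (run M \<phi> a m) = qans M" and tD: "\<forall>i<K. snd (ts ! iD i) = 0 \<and> fst (ts ! iD i) 0 = S0"
      and cok: "Cok ts r" and r1: "1 \<le> r" and card: "card (lrev M \<phi> a ` {..m}) = Suc r"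
      unfolding PS_def by auto
    have ans: "length (content (ts ! 1)) \<le> lrev M \<phi> a m" using ans0 by simp
    show ?thesis
    proof (cases "qans M = qhalt M")
      case True
      then have e: "enc (qans M) = HALTs" by (simp add: enc_def)
      have "PH \<phi> a m ts" using meq fa True card cok by (simp add: PH_def Cok_def)
      then show ?thesis using st' e len ans by (auto simp: MI_def intro!: inv_intro[where m=m])
    next
      case False
      have q': "enc (qans M) < nstates M \<or> enc (qans M) = QRY" using wfM False by (simp add: enc_def wf_otm_def)
      have rok: "Rok ts L" using tR tD L \<open>h = 0\<close> by (simp add: Rok_def)
      have mu0: "mu ts L = 0" using tR tD \<open>h = 0\<close> by (simp add: mu_def)
      obtain r' where r': "r = Suc r'" using r1 by (cases r) auto
      have "Suc n \<le> r * Y L + X L + mu ts L * T L"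
        using bnd \<open>h = 0\<close> mu0 r' by (simp add: BS_def Y_def X_def algebra_simps)
      then have "PAL \<phi> a (Suc n) m (enc (qans M)) ts"
        unfolding PAL_def using fa False meq tw rok mu0 cok card L \<open>h = 0\<close> by auto
      then show ?thesis using st' len ans q' by (auto simp: MI_def intro!: inv_intro[where m=m])
    qed
  next
    case False
    have d: "deltaN SYNC3 ss = (SYNC3, mk (SYNC3A ss))" using False sW by (simp add: deltaN_def)
    define ts' where "ts' = map (\<lambda>i. act i (ts!i) (SYNC3A ss i)) [0..<nt]"
    have st: "step N \<phi> (SYNC3, ts) = (SYNC3, ts')" unfolding ts'_def
      by (rule stepN) (use d len ss_def in auto)
    have l: "length ts' = nt" by (simp add: ts'_def)
    have new: "\<And>x. x < nt \<Longrightarrow> ts' ! x = act x (ts!x) (SYNC3A ss x)" by (simp add: ts'_def)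
    have K: "\<And>x. x < nt \<Longrightarrow> SYNC3A ss x = keep ss x \<Longrightarrow> ts' ! x = ts ! x" using new kp by simp
    have oth: "\<forall>i<tM. ts' ! i = ts ! i" "\<forall>i<K. ts' ! iD i = ts ! iD i" "\<forall>j<Nc. ts' ! iC j = ts ! iC j"
      using K by (auto simp: SYNC3A_def)
    have tw': "ts' ! iW = (ruler L, h - 1)" using new[of iW] tw ssx[of iW] tM_ge by (simp add: SYNC3A_def act_hi)
    have tR': "\<forall>i<K. ts' ! iR i = (ruler L, h - 1)"
    proof (intro allI impI)
      fix i assume i: "i < K"
      have "ts' ! iR i = act (iR i) (ts ! iR i) (ss ! iR i, MvL)" using new[of "iR i"] i by (simp add: SYNC3A_def)
      then show "ts' ! iR i = (ruler L, h - 1)" using i tR ssx[of "iR i"] tM_ge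
        by (simp add: act_hi)
    qed
    have ps': "PS \<phi> a m r ts'" using ps PS_cong[OF oth] by simp
    have "PS3 \<phi> a (Suc n) m ts'" unfolding PS3_def
      apply (rule exI[of _ r], rule exI[of _ L], rule exI[of _ "h - 1"])
      using L ps' tw' tR' bnd h False by auto
    then show ?thesis using st l ans0[of ts'] oth(1) tM_ge by (auto simp: MI_def intro!: inv_intro[where m=m])
  qed
qed

end


context ext
begin

lemma Inv_step:
  assumes I: "Inv \<phi> a n l c"
  shows "Inv \<phi> a (Suc n) (max l (length (content (snd (step N \<phi> c) ! 1)))) (step N \<phi> c)"
proof -
  obtain q ts where c: "c = (q, ts)" by (cases c)
  from I c obtain m where len: "length ts = nt" and l: "l = lrev M \<phi> a m" and mi: "MI \<phi> a n m q ts"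
    by (auto simp: Inv_def)
  have "Inv \<phi> a (Suc n) (max (lrev M \<phi> a m) (length (content (snd (step N \<phi> (q, ts)) ! 1)))) (step N \<phi> (q, ts))"
  using mi[unfolded MI_def]
  proof (elim disjE conjE)
    assume "q = INIT0" "PI0 a n m ts" then show ?thesis by (metis step_I0[OF len])
  next
    assume "q = INIT1" "PI1 a n m ts" then show ?thesis by (metis step_I1[OF len])
  next
    assume "q = INITRW" "PIRW a n m ts" then show ?thesis by (metis step_IRW[OF len])
  next
    assume "q < nstates M" "PAL \<phi> a n m q ts" then show ?thesis by (metis step_SIM[OF len])
  next
    assume "q = QRY" "PAL \<phi> a n m q ts" then show ?thesis by (metis step_QRY[OF len])
  next
    assume "q = HALTs" "PH \<phi> a m ts" then show ?thesis by (metis step_HALT[OF len])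
  next
    assume "q = CHK0" "PC0 \<phi> a n m ts" then show ?thesis by (metis step_CHK0[OF len])
  next
    assume "q = CHK1" "PC1 \<phi> a n m ts" then show ?thesis by (metis step_CHK1[OF len])
  next
    assume "q = CHKRW" "PCRW \<phi> a n m ts" then show ?thesis by (metis step_CHKRW[OF len])
  next
    assume "q = CHK1X" "PC1X \<phi> a n m ts" then show ?thesis by (metis step_CHK1X[OF len])
  next
    assume "q = CHKRWX" "PCRWX \<phi> a n m ts" then show ?thesis by (metis step_CHKRWX[OF len])
  next
    assume "q = SYNC1" "PS1 \<phi> a n m ts" then show ?thesis by (metis step_SYNC1[OF len])
  next
    assume "q = SYNC2" "PS2 \<phi> a n m ts" then show ?thesis by (metis step_SYNC2[OF len])
  next
    assume "q = SYNC3" "PS3 \<phi> a n m ts" then show ?thesis by (metis step_SYNC3[OF len])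
  qed
  then show ?thesis using c l by simp
qed

lemma initial_N: "initial N a = (INIT0, (encode a, 0) # replicate (nt - 1) blankT)"
  by (simp add: initial_def blankT_def)

lemma Inv_0: "Inv \<phi> a 0 (lrev N \<phi> a 0) (run N \<phi> a 0)"
proof -
  have nt1: "1 \<le> nt" using nt_simps(7) by linarith
  let ?ts = "(encode a, 0) # replicate (nt - 1) blankT"
  have "PI0 a 0 0 ?ts" unfolding PI0_def by (auto simp: nth_Cons')
  moreover have "length ?ts = nt" using nt1 by simp
  ultimately show ?thesis by (auto simp: run_0 initial_N MI_def intro!: inv_intro[where m=0])
qed

lemma Inv_run: "Inv \<phi> a n (lrev N \<phi> a n) (run N \<phi> a n)"
proof (induction n)
  case 0 then show ?case by (rule Inv_0)
next
  case (Suc n)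
  from Inv_step[OF Suc] show ?case by (simp add: run_Suc lrev.simps(2))
qed

definition Bd :: "nat \<Rightarrow> nat" where
  "Bd l = Nc * Y (Suc l) + 2 * X (Suc l) + Gam (Suc l) * T (Suc l) + 2 * l + 4"

lemma Bd_mono: "l \<le> l' \<Longrightarrow> Bd l \<le> Bd l'"
  unfolding Bd_def by (intro add_mono mult_le_mono Y_mono X_mono Gam_mono T_mono) auto

lemma BX_le: "r \<le> Nc \<Longrightarrow> lb \<le> l \<Longrightarrow> BX r lb \<le> Nc * Y (Suc l) + X (Suc l) + Gam (Suc l) * T (Suc l)"
  unfolding BX_def by (intro add_mono mult_le_mono Y_mono X_mono Gam_mono T_mono) auto

lemma B0_le: "Rok ts (Suc o0) \<Longrightarrow> r \<le> Nc \<Longrightarrow> o0 \<le> l \<Longrightarrow> B0 ts r o0 \<le> Nc * Y (Suc l) + X (Suc l) + Gam (Suc l) * T (Suc l)"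
  using B0_le_BX[of ts o0 o0 r] BX_le[of r o0 l] by simp

lemma PW_bnd: "PW \<phi> a m m0 b r ts \<Longrightarrow> B0 ts r (lrev M \<phi> a m0) \<le> Nc * Y (Suc (lrev M \<phi> a m)) + X (Suc (lrev M \<phi> a m)) + Gam (Suc (lrev M \<phi> a m)) * T (Suc (lrev M \<phi> a m))
   \<and> length b \<le> lrev M \<phi> a m \<and> r \<le> Nc"
  unfolding PW_def Cok_def using B0_le[of ts "lrev M \<phi> a m0" r "lrev M \<phi> a m"] by auto

lemma KL_le: "K * Suc l + 3 * Suc l + 5 \<le> X (Suc l)"
proof -
  have "K * Suc l + 3 * Suc l + 5 \<le> (K + 4) * Suc l + 10" by (simp add: algebra_simps)
  then show ?thesis by (simp add: X_def)
qed

lemma mode_bound: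
  assumes mi: "MI \<phi> a n m q ts" and nh: "q \<noteq> HALTs"
  shows "n \<le> Bd (lrev M \<phi> a m)"
proof -
  define l where "l = lrev M \<phi> a m"
  have c1: "Y (Suc l) = Gam (Suc l) * T (Suc l) + X (Suc l)" by (simp add: Y_def)
  consider "q = INIT0 \<and> PI0 a n m ts" | "q = INIT1 \<and> PI1 a n m ts" | "q = INITRW \<and> PIRW a n m ts"
    | "PAL \<phi> a n m q ts" | "PC0 \<phi> a n m ts" | "PC1 \<phi> a n m ts" | "PCRW \<phi> a n m ts"
    | "PC1X \<phi> a n m ts" | "PCRWX \<phi> a n m ts" | "PS1 \<phi> a n m ts" | "PS2 \<phi> a n m ts" | "PS3 \<phi> a n m ts"
    using mi nh unfolding MI_def by auto
  then have "n \<le> Bd l"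
  proof cases
    case 1 then show ?thesis by (simp add: PI0_def)
  next
    case 2 then show ?thesis by (auto simp: PI1_def Bd_def l_def)
  next
    case 3 then show ?thesis by (auto simp: PIRW_def Bd_def l_def)
  next
    case 4
    then obtain r where r: "Cok ts r" "n \<le> r * Y (Suc l) + X (Suc l) + mu ts (Suc l) * T (Suc l)"
      and rok: "Rok ts (Suc l)" unfolding PAL_def l_def by auto
    have h1: "r * Y (Suc l) \<le> Nc * Y (Suc l)" using r(1) by (simp add: Cok_def)
    have h2: "mu ts (Suc l) * T (Suc l) \<le> Gam (Suc l) * T (Suc l)" using Gam_bound[OF rok] by simp
    show ?thesis using r(2) h1 h2 unfolding Bd_def by linarith
  next
    case 5
    then obtain m0 b r where pw: "PW \<phi> a m m0 b r ts" and b: "n \<le> B0 ts r (lrev M \<phi> a m0) + 1"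
      unfolding PC0_def by blast
    show ?thesis using PW_bnd[OF pw] b by (simp add: Bd_def l_def)
  next
    case 6
    then obtain m0 b r p where pw: "PW \<phi> a m m0 b r ts" and b: "n \<le> B0 ts r (lrev M \<phi> a m0) + 2 + p" "p \<le> length b"
      unfolding PC1_def by blast
    show ?thesis using PW_bnd[OF pw] b by (simp add: Bd_def l_def)
  next
    case 7
    then obtain m0 b r h where pw: "PW \<phi> a m m0 b r ts" and b: "n + h \<le> B0 ts r (lrev M \<phi> a m0) + 4 + 2 * length b"
      unfolding PCRW_def by blast
    show ?thesis using PW_bnd[OF pw] b by (simp add: Bd_def l_def)
  next
    case 8
    then obtain m0 b r p where pw: "PW \<phi> a m m0 b r ts" and b: "n \<le> BX r (length b) + 2 + p" "p \<le> length b"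
      unfolding PC1X_def by blast
    show ?thesis using PW_bnd[OF pw] b BX_le[of r "length b" l] by (simp add: Bd_def l_def)
  next
    case 9
    then obtain m0 b r h where pw: "PW \<phi> a m m0 b r ts" and b: "n + h \<le> BX r (length b) + 4 + 2 * length b"
      unfolding PCRWX_def by blast
    show ?thesis using PW_bnd[OF pw] b BX_le[of r "length b" l] by (simp add: Bd_def l_def)
  next
    case 10
    then obtain r where ps: "PS \<phi> a m r ts" and b: "n \<le> BS r (Suc l) + 2 * Suc l + 3 + K * Suc l"
      unfolding PS1_def l_def by fastforce
    have "r \<le> Nc" using ps by (simp add: PS_def Cok_def)
    then have "BS r (Suc l) \<le> Nc * Y (Suc l) + X (Suc l) + Gam (Suc l) * T (Suc l)"
      unfolding BS_def by (intro add_mono mult_le_mono) auto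
    then show ?thesis using b KL_le[of l] by (simp add: Bd_def)
  next
    case 11
    then obtain r h where ps: "PS \<phi> a m r ts" and b: "n \<le> BS r (Suc l) + 2 * Suc l + 4 + K * Suc l + h" "h \<le> Suc l"
      unfolding PS2_def l_def by fastforce
    have "r \<le> Nc" using ps by (simp add: PS_def Cok_def)
    then have "BS r (Suc l) \<le> Nc * Y (Suc l) + X (Suc l) + Gam (Suc l) * T (Suc l)"
      unfolding BS_def by (intro add_mono mult_le_mono) auto
    then show ?thesis using b KL_le[of l] by (simp add: Bd_def)
  next
    case 12
    then obtain r h where ps: "PS \<phi> a m r ts" and b: "n + h \<le> BS r (Suc l) + 4 * Suc l + 5 + K * Suc l"
      unfolding PS3_def l_def by fastforce
    have "r \<le> Nc" using ps by (simp add: PS_def Cok_def)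
    then have "BS r (Suc l) \<le> Nc * Y (Suc l) + X (Suc l) + Gam (Suc l) * T (Suc l)"
      unfolding BS_def by (intro add_mono mult_le_mono) auto
    then show ?thesis using b KL_le[of l] by (simp add: Bd_def)
  qed
  then show ?thesis by (simp add: l_def)
qed

lemma card_Suc_le: "card (lrev M \<phi> a ` {..Suc m0}) \<le> Suc (card (lrev M \<phi> a ` {..m0}))"
  by (simp add: atMost_Suc card_insert_le_m1)

lemma mode_card:
  assumes mi: "MI \<phi> a n m q ts"
  shows "card (lrev M \<phi> a ` {..m}) \<le> Nc + 2"
proof -
  have w: "card (lrev M \<phi> a ` {..m}) \<le> Nc + 2" if "PW \<phi> a m m0 b r ts" for m0 b r
    using that card_Suc_le[of \<phi> a m0] by (auto simp: PW_def Cok_def)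
  have s: "card (lrev M \<phi> a ` {..m}) \<le> Nc + 2" if "PS \<phi> a m r ts" for r
    using that by (auto simp: PS_def Cok_def)
  show ?thesis using mi w s unfolding MI_def
    by (auto simp: PI0_def PI1_def PIRW_def PAL_def PH_def PC0_def PC1_def PCRW_def PC1X_def PCRWX_def
        PS1_def PS2_def PS3_def Cok_def)
qed

end


lemma fin_sub: "finite S \<Longrightarrow> S \<subseteq> range f \<Longrightarrow> \<exists>n::nat. S \<subseteq> f ` {..n}"
proof (induction S rule: finite_induct)
  case empty then show ?case by simp
next
  case (insert x S)
  then obtain n where n: "S \<subseteq> f ` {..n}" by auto
  from insert obtain k where k: "x = f k" by auto
  have "insert x S \<subseteq> f ` {..max n k}" using n k by auto
  then show ?case by blast
qed

lemma range_card_bound: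
  assumes "\<And>n::nat. card (f ` {..n}) \<le> B"
  shows "finite (range f) \<and> card (range f) \<le> B"
proof (cases "finite (range f)")
  case False
  then obtain S where S: "S \<subseteq> range f" "finite S" "card S = Suc B"
    using infinite_arbitrarily_large by blast
  then obtain n where "S \<subseteq> f ` {..n}" using fin_sub by blast
  then have "card S \<le> card (f ` {..n})" by (intro card_mono) auto
  then show ?thesis using assms[of n] S by simp
next
  case True
  then obtain n where "range f \<subseteq> f ` {..n}" using fin_sub by blast
  then have "card (range f) \<le> card (f ` {..n})" by (intro card_mono) auto
  then show ?thesis using assms[of n] True by simp
qed

context ext
begin

lemma Inv_m: "Inv \<phi> a n l c \<Longrightarrow> \<exists>m. l = lrev M \<phi> a m \<and> card (lrev M \<phi> a ` {..m}) \<le> Nc + 2"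
  using mode_card by (auto simp: Inv_def)

lemma Inv_bound: "Inv \<phi> a n l c \<Longrightarrow> fst c \<noteq> HALTs \<Longrightarrow> n \<le> Bd l"
  using mode_bound by (auto simp: Inv_def)

lemma Inv_halt: "Inv \<phi> a n l c \<Longrightarrow> fst c = HALTs \<Longrightarrow>
   \<exists>m. Meq (snd c) (snd (run M \<phi> a m)) \<and> (fst (run M \<phi> a m) = qhalt M \<or> \<phi> \<notin> A)"
  by (auto simp: Inv_def MI_def PAL_def PH_def)

lemma lrevN_card: "card (lrev N \<phi> a ` {..n}) \<le> Nc + 2"
proof -
  obtain mn where mn: "lrev N \<phi> a n = lrev M \<phi> a mn" "card (lrev M \<phi> a ` {..mn}) \<le> Nc + 2"
    using Inv_m[OF Inv_run[of \<phi> a n]] by blast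
  have "lrev N \<phi> a ` {..n} \<subseteq> lrev M \<phi> a ` {..mn}"
  proof
    fix v assume "v \<in> lrev N \<phi> a ` {..n}"
    then obtain j where j: "j \<le> n" "v = lrev N \<phi> a j" by auto
    obtain mj where mj: "lrev N \<phi> a j = lrev M \<phi> a mj"
      using Inv_m[OF Inv_run[of \<phi> a j]] by blast
    show "v \<in> lrev M \<phi> a ` {..mn}"
    proof (cases "mj \<le> mn")
      case True then show ?thesis using j mj by auto
    next
      case False
      have "lrev M \<phi> a mn \<le> lrev M \<phi> a mj" using False lrev_mono[of mn mj M \<phi> a] by simp
      moreover have "lrev N \<phi> a j \<le> lrev N \<phi> a n" using lrev_mono[OF j(1)] by simp
      ultimately have "v = lrev M \<phi> a mn" using j mj mn by simp
      then show ?thesis by auto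
    qed
  qed
  then have "card (lrev N \<phi> a ` {..n}) \<le> card (lrev M \<phi> a ` {..mn})" by (intro card_mono) auto
  then show ?thesis using mn by simp
qed

lemma flrN: "finite (range (lrev N \<phi> a)) \<and> card (range (lrev N \<phi> a)) \<le> Nc + 2"
  by (rule range_card_bound) (rule lrevN_card)

lemma halts: "\<exists>n. halted_at N \<phi> a n"
proof (rule ccontr)
  assume nh: "\<not> (\<exists>n. halted_at N \<phi> a n)"
  have f: "finite (range (lrev N \<phi> a))" using flrN by simp
  define B where "B = Max (range (lrev N \<phi> a))"
  have "\<And>n. n \<le> Bd B"
  proof -
    fix n
    have "n \<le> Bd (lrev N \<phi> a n)" using Inv_bound[OF Inv_run[of \<phi> a n]] nh by (auto simp: halted_at_def)
    also have "\<dots> \<le> Bd B" using f by (intro Bd_mono) (auto simp: B_def)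
    finally show "n \<le> Bd B" .
  qed
  from this[of "Suc (Bd B)"] show False by simp
qed

lemma timeN: "time N \<phi> a \<noteq> \<infinity>" using halts by (auto simp: time_def)

lemma scN: "step_count N UNIV (\<lambda>l. Bd l + 1)"
  unfolding step_count_def
proof (intro ballI allI impI)
  fix \<phi> a n assume le: "enat n \<le> time N \<phi> a"
  show "n \<le> Bd (lrev N \<phi> a n) + 1"
  proof (cases n)
    case 0 then show ?thesis by simp
  next
    case (Suc k)
    have ex: "\<exists>j. halted_at N \<phi> a j" by (rule halts)
    then have "enat n \<le> enat (LEAST j. halted_at N \<phi> a j)" using le by (simp add: time_def)
    then have "k < (LEAST j. halted_at N \<phi> a j)" using Suc by simp
    then have "\<not> halted_at N \<phi> a k" by (rule not_less_Least)
    then have "k \<le> Bd (lrev N \<phi> a k)" using Inv_bound[OF Inv_run[of \<phi> a k]] by (simp add: halted_at_def)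
    also have "\<dots> \<le> Bd (lrev N \<phi> a n)" using Suc by (intro Bd_mono lrev_mono) simp
    finally show ?thesis using Suc by simp
  qed
qed

definition Qb :: "nat \<Rightarrow> nat" where
  "Qb l = Nc * ((l+2)^K * (2*l+5) + ((K+4)*(l+1)+10)) + 2*((K+4)*(l+1)+10) + (l+2)^K*(2*l+5) + 2*l + 5"

lemma Bd_Qb: "Bd l + 1 \<le> Qb l"
proof -
  have g: "Gam (Suc l) \<le> (l+2)^K" by (simp add: Gam_def)
  have t: "T (Suc l) = 2*l+5" by (simp add: T_def)
  have x: "X (Suc l) = (K+4)*(l+1)+10" by (simp add: X_def)
  have y: "Y (Suc l) \<le> (l+2)^K * (2*l+5) + ((K+4)*(l+1)+10)"
    unfolding Y_def t x using g by simp
  have gt: "Gam (Suc l) * T (Suc l) \<le> (l+2)^K*(2*l+5)" unfolding t using g by simp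
  have "Nc * Y (Suc l) \<le> Nc * ((l+2)^K * (2*l+5) + ((K+4)*(l+1)+10))" using y by simp
  then show ?thesis unfolding Bd_def Qb_def x using gt by linarith
qed

lemma Qb_poly: "is_polynomial Qb"
proof -
  have "is_polynomial (\<lambda>l. Nc * ((l+2)^K * (2*l+5) + ((K+4)*(l+1)+10)) + 2*((K+4)*(l+1)+10) + (l+2)^K*(2*l+5) + 2*l + 5)"
    by (intro is_poly_add is_poly_mult is_poly_pow is_poly_const is_poly_id)
  then show ?thesis by (simp add: Qb_def[abs_def])
qed

lemma scN': "step_count N UNIV Qb"
  using scN Bd_Qb unfolding step_count_def by (meson le_trans)

lemma outN:
  assumes "\<phi> \<in> A"
  shows "otm_output N \<phi> a = otm_output M \<phi> a"
proof -
  define n0 where "n0 = (LEAST j. halted_at N \<phi> a j)"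
  have h0: "halted_at N \<phi> a n0" unfolding n0_def using halts by (rule LeastI_ex)
  then have "fst (run N \<phi> a n0) = HALTs" by (simp add: halted_at_def)
  then obtain m where meq: "Meq (snd (run N \<phi> a n0)) (snd (run M \<phi> a m))" and hm: "fst (run M \<phi> a m) = qhalt M"
    using Inv_halt[OF Inv_run[of \<phi> a n0]] assms by blast
  have hM: "halted_at M \<phi> a m" using hm by (simp add: halted_at_def)
  define m0 where "m0 = (LEAST j. halted_at M \<phi> a j)"
  have h0M: "halted_at M \<phi> a m0" unfolding m0_def using hM by (rule LeastI)
  have "m0 \<le> m" unfolding m0_def using hM by (rule Least_le)
  then have rr: "run M \<phi> a m = run M \<phi> a m0" by (rule halted_stable'[OF h0M])
  have "otm_output N \<phi> a = content (snd (run N \<phi> a n0) ! 3)" by (simp add: otm_output_def n0_def)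
  also have "\<dots> = content (snd (run M \<phi> a m) ! 3)" using meq tM_ge by (simp add: Meq_def)
  also have "\<dots> = otm_output M \<phi> a" using rr by (simp add: otm_output_def m0_def)
  finally show ?thesis .
qed

theorem N_works: "strongly_ptime (\<lambda>\<phi>. otm_output N \<phi>) \<and> (\<forall>\<phi>\<in>A. otm_output N \<phi> = otm_output M \<phi>)"
proof
  show "strongly_ptime (\<lambda>\<phi>. otm_output N \<phi>)"
    unfolding strongly_ptime_def restricted_strongly_ptime_def
  proof (intro exI conjI)
    show "wf_otm N" by (rule wfN)
    show "computes N UNIV (\<lambda>\<phi>. otm_output N \<phi>)" using timeN by (simp add: computes_def)
    show "finite_length_revision N UNIV" unfolding finite_length_revision_def using flrN by blast
    show "is_polynomial Qb" by (rule Qb_poly)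
    show "step_count N UNIV Qb" by (rule scN')
  qed
  show "\<forall>\<phi>\<in>A. otm_output N \<phi> = otm_output M \<phi>" using outN by auto
qed

end


theorem mainTheorem12:
  fixes A :: "strfun set" and F :: "strfun \<Rightarrow> strfun"
  assumes "restricted_strongly_ptime A F"
  shows "\<exists>G. strongly_ptime G \<and> (\<forall>\<phi>\<in>A. G \<phi> = F \<phi>)"
proof -
  from assms obtain M t where wf: "wf_otm M" and comp: "computes M A F" and flr: "finite_length_revision M A"
    and tp: "is_polynomial t" and sc: "step_count M A t"
    unfolding restricted_strongly_ptime_def by blast
  from flr obtain Nc where flr': "\<forall>\<phi>\<in>A. \<forall>a. finite (range (lrev M \<phi> a)) \<and> card (range (lrev M \<phi> a)) \<le> Nc"
    unfolding finite_length_revision_def by blast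
  from tp obtain p where tp': "\<forall>n. t n = poly p n" unfolding is_polynomial_def by blast
  obtain K where K: "\<forall>x. poly p x < (x+2)^K" using poly_bound by blast
  have tK: "\<forall>x. t x < (x+2)^K" using tp' K by simp
  interpret E: ext M K Nc A t using wf sc flr' tK by unfold_locales
  have out: "\<forall>\<phi>\<in>A. otm_output M \<phi> = F \<phi>" using comp by (auto simp: computes_def fun_eq_iff)
  show ?thesis using E.N_works out by (intro exI[of _ "\<lambda>\<phi>. otm_output E.N \<phi>"]) auto
qed


end
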